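(* Fix $\lambda>0$. The function $\mathbf{K}\mapsto\mathcal{L}(\mathbf{K},\lambda)$ defined in the context is twice continuously differentiable on $\mathcal{K}$.
   Context: Consider the linear system $\mathbf{x}_{k+1}=\mathbf{A}\mathbf{x}_k+\mathbf{B}\mathbf{u}_k+\mathbf{w}_k$ with $\mathbf{x}_k\in\mathbb{R}^n$, $\mathbf{u}_k\in\mathbb{R}^p$, $(\mathbf{A},\mathbf{B})$ stabilizable, and i.i.d. noise $\mathbf{w}_k\sim\mathcal{N}(0,\Sigma_w)$. Let $\mathbf{Q}\in\mathbb{R}^{n\times n}$, $\mathbf{R}\in\mathbb{R}^{p\times p}$ be positive definite, $(\mathbf{A},\mathbf{Q}^{1/2})$ detectable, $\epsilon>0$, $\delta>0$, $\mathbf{q}\in\mathbb{R}^n$. Policies are $\mathbf{u}_k=-\mathbf{K}\mathbf{x}_k+\sigma_k$ with $\sigma_k\sim\mathcal{N}(0,\Sigma_\sigma)$ i.i.d., $\Sigma_\sigma$ a fixed covariance matrix. Let $\Sigma_{\bar w}=\Sigma_w+\mathbf{B}\Sigma_\sigma\mathbf{B}^T$ and $\mathcal{K}=\{\mathbf{K}\in\mathbb{R}^{p\times n}:\rho(\mathbf{A}-\mathbf{B}\mathbf{K})<1\}$. For $\mathbf{K}\in\mathcal{K}$, let $\Sigma_K$ solve $\Sigma_K=\Sigma_{\bar w}+(\mathbf{A}-\mathbf{B}\mathbf{K})\Sigma_K(\mathbf{A}-\mathbf{B}\mathbf{K})^T$. Define $J(\mathbf{K})=\mathrm{tr}((\mathbf{Q}+\mathbf{K}^T\mathbf{R}\mathbf{K})\Sigma_K+\mathbf{R}\Sigma_\sigma)$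 and $J_c(\mathbf{K})=\mathrm{E}[Q(a(\mathbf{x},\mathbf{K}))]$ with $\mathbf{x}\sim\mathcal{N}(0,\Sigma_K)$ the stationary closed-loop state, $Q(a)=\frac{1}{\sqrt{2\pi}}\int_a^\infty e^{-z^2/2}dz$, $a(\mathbf{x},\mathbf{K})=\frac{\epsilon-\mathbf{q}^T(\mathbf{A}-\mathbf{B}\mathbf{K})\mathbf{x}}{\sqrt{\mathbf{q}^T\Sigma_{\bar w}\mathbf{q}}}$. The Lagrangian is $\mathcal{L}(\mathbf{K},\lambda)=J(\mathbf{K})+\lambda(J_c(\mathbf{K})-\delta)$. *)

theory Defs
  imports "HOL-Analysis.Analysis" "HOL-Probability.Probability"
begin

definition cmat :: "real^'n^'n \<Rightarrow> complex^'n^'n" where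
  "cmat M = (\<chi> i j. complex_of_real (M $ i $ j))"

definition spec_rad :: "real^'n^'n \<Rightarrow> real" where
  "spec_rad M = Max {cmod l | l. det (mat l - cmat M) = 0}"

definition pos_def_mat :: "real^'n^'n \<Rightarrow> bool" where
  "pos_def_mat M \<longleftrightarrow> transpose M = M \<and> (\<forall>x. x \<noteq> 0 \<longrightarrow> x \<bullet> (M *v x) > 0)"

definition psd_mat :: "real^'n^'n \<Rightarrow> bool" where
  "psd_mat M \<longleftrightarrow> transpose M = M \<and> (\<forall>x. x \<bullet> (M *v x) \<ge> 0)"

definition stabilizable :: "real^'n^'n \<Rightarrow> real^'p^'n \<Rightarrow> bool" where
  "stabilizable A B \<longleftrightarrow> (\<exists>K::real^'n^'p. spec_rad (A - B ** K) < 1)"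

definition detectable :: "real^'n^'n \<Rightarrow> real^'n^'m \<Rightarrow> bool" where
  "detectable A C \<longleftrightarrow> (\<exists>L::real^'m^'n. spec_rad (A - L ** C) < 1)"

definition psd_sqrt :: "real^'n^'n \<Rightarrow> real^'n^'n" where
  "psd_sqrt M = (THE S. psd_mat S \<and> S ** S = M)"

text \<open>Expectation of f(x) for x ~ N(0,\<Sigma>): x = L z with L L^T = \<Sigma> and z standard
  normal on R^n (product of independent standard normals).\<close>
definition gauss_expect :: "real^'n^'n \<Rightarrow> (real^'n \<Rightarrow> real) \<Rightarrow> real" where
  "gauss_expect \<Sigma> f =
     (let L = (SOME L::real^'n^'n. L ** transpose L = \<Sigma>) in
      integral\<^sup>L (PiM UNIV (\<lambda>_::'n. std_normal_distribution)) (\<lambda>z. f (L *v (\<chi> i. z i))))"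

definition Qfun :: "real \<Rightarrow> real" where
  "Qfun a = (1 / sqrt (2 * pi)) * integral {a..} (\<lambda>z. exp (- (z\<^sup>2) / 2))"

definition Sigma_wbar :: "real^'p^'n \<Rightarrow> real^'n^'n \<Rightarrow> real^'p^'p \<Rightarrow> real^'n^'n" where
  "Sigma_wbar B Sw Ss = Sw + B ** Ss ** transpose B"

definition Sigma_K :: "real^'n^'n \<Rightarrow> real^'p^'n \<Rightarrow> real^'n^'n \<Rightarrow> real^'p^'p \<Rightarrow> real^'n^'p
    \<Rightarrow> real^'n^'n" where
  "Sigma_K A B Sw Ss K =
     (THE S. S = Sigma_wbar B Sw Ss + (A - B ** K) ** S ** transpose (A - B ** K))"

definition Jcost :: "real^'n^'n \<Rightarrow> real^'p^'n \<Rightarrow> real^'n^'n \<Rightarrow> real^'p^'p \<Rightarrow> real^'n^'n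
    \<Rightarrow> real^'p^'p \<Rightarrow> real^'n^'p \<Rightarrow> real" where
  "Jcost A B Sw Ss Q R K =
     trace ((Q + transpose K ** R ** K) ** Sigma_K A B Sw Ss K) + trace (R ** Ss)"

definition a_fun :: "real^'n^'n \<Rightarrow> real^'p^'n \<Rightarrow> real^'n^'n \<Rightarrow> real^'p^'p \<Rightarrow> real
    \<Rightarrow> real^'n \<Rightarrow> real^'n \<Rightarrow> real^'n^'p \<Rightarrow> real" where
  "a_fun A B Sw Ss \<epsilon> q x K =
     (\<epsilon> - q \<bullet> ((A - B ** K) *v x)) / sqrt (q \<bullet> (Sigma_wbar B Sw Ss *v q))"

definition Jc :: "real^'n^'n \<Rightarrow> real^'p^'n \<Rightarrow> real^'n^'n \<Rightarrow> real^'p^'p \<Rightarrow> real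
    \<Rightarrow> real^'n \<Rightarrow> real^'n^'p \<Rightarrow> real" where
  "Jc A B Sw Ss \<epsilon> q K =
     gauss_expect (Sigma_K A B Sw Ss K) (\<lambda>x. Qfun (a_fun A B Sw Ss \<epsilon> q x K))"

definition Lagr :: "real^'n^'n \<Rightarrow> real^'p^'n \<Rightarrow> real^'n^'n \<Rightarrow> real^'p^'p \<Rightarrow> real^'n^'n
    \<Rightarrow> real^'p^'p \<Rightarrow> real \<Rightarrow> real \<Rightarrow> real^'n \<Rightarrow> real^'n^'p \<Rightarrow> real \<Rightarrow> real" where
  "Lagr A B Sw Ss Q R \<epsilon> \<delta> q K lam =
     Jcost A B Sw Ss Q R K + lam * (Jc A B Sw Ss \<epsilon> q K - \<delta>)"

definition C2_on :: "'a::real_normed_vector set \<Rightarrow> ('a \<Rightarrow> 'b::real_normed_vector) \<Rightarrow> bool" where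
  "C2_on S f \<longleftrightarrow>
     (\<exists>(Df::'a \<Rightarrow> 'a \<Rightarrow>\<^sub>L 'b) (D2f::'a \<Rightarrow> 'a \<Rightarrow>\<^sub>L ('a \<Rightarrow>\<^sub>L 'b)).
        (\<forall>x\<in>S. (f has_derivative blinfun_apply (Df x)) (at x)) \<and>
        (\<forall>x\<in>S. (Df has_derivative blinfun_apply (D2f x)) (at x)) \<and>
        continuous_on S D2f)"

end

theory Submission
  imports Defs "HOL-Complex_Analysis.Complex_Analysis" "HOL-Computational_Algebra.Fundamental_Theorem_Algebra"
begin

no_notation fps_nth (infixl \<open>$\<close> 75)

definition C1 :: "'a::real_normed_vector set \<Rightarrow> ('a \<Rightarrow> 'b::real_normed_vector) \<Rightarrow> bool" where
  "C1 U f \<longleftrightarrow> (\<exists>Df::'a \<Rightarrow> 'a \<Rightarrow>\<^sub>L 'b. (\<forall>x\<in>U. (f has_derivative blinfun_apply (Df x)) (at x)) \<and> continuous_on U Df)"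

definition C2 :: "'a::real_normed_vector set \<Rightarrow> ('a \<Rightarrow> 'b::real_normed_vector) \<Rightarrow> bool" where
  "C2 U f \<longleftrightarrow> (\<exists>Df::'a \<Rightarrow> 'a \<Rightarrow>\<^sub>L 'b. (\<forall>x\<in>U. (f has_derivative blinfun_apply (Df x)) (at x)) \<and> C1 U Df)"

lemma C2_imp_C2_on: "C2 U f \<Longrightarrow> C2_on U f"
  unfolding C2_def C1_def C2_on_def by blast

lemma C1_cont: "C1 U f \<Longrightarrow> continuous_on U f"
  unfolding C1_def by (meson continuous_at_imp_continuous_on has_derivative_continuous)

lemma C1_const: "C1 U (\<lambda>x. c)"
proof -
  have "blinfun_apply (0::'a\<Rightarrow>\<^sub>L'b) = (\<lambda>h. 0)" for dummy :: 'a by auto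
  then show ?thesis unfolding C1_def
    by (intro exI[of _ "\<lambda>x. 0"]) (auto intro: derivative_eq_intros)
qed

lemma C2_const: "C2 U (\<lambda>x. c)"
proof -
  have "blinfun_apply (0::'a\<Rightarrow>\<^sub>L'b) = (\<lambda>h. 0)" for dummy :: 'a by auto
  then show ?thesis unfolding C2_def
    by (intro exI[of _ "\<lambda>x. 0"]) (auto intro: derivative_eq_intros C1_const)
qed

lemma C1_linear: "bounded_linear L \<Longrightarrow> C1 U L"
  unfolding C1_def
  by (intro exI[of _ "\<lambda>x. Blinfun L"])
     (auto simp: bounded_linear_Blinfun_apply intro: bounded_linear_imp_has_derivative)

lemma C2_linear: "bounded_linear L \<Longrightarrow> C2 U L"
  unfolding C2_def
  by (intro exI[of _ "\<lambda>x. Blinfun L"])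
     (auto simp: bounded_linear_Blinfun_apply intro: bounded_linear_imp_has_derivative C1_const)

lemma C1_add:
  assumes "C1 U f" "C1 U g" shows "C1 U (\<lambda>x. f x + g x)"
proof -
  from assms obtain Df Dg where Df: "\<forall>x\<in>U. (f has_derivative blinfun_apply (Df x)) (at x)" "continuous_on U Df"
    and Dg: "\<forall>x\<in>U. (g has_derivative blinfun_apply (Dg x)) (at x)" "continuous_on U Dg"
    unfolding C1_def by blast
  show ?thesis unfolding C1_def
  proof (intro exI[of _ "\<lambda>x. Df x + Dg x"] conjI ballI)
    fix x assume "x \<in> U"
    then have "((\<lambda>x. f x + g x) has_derivative (\<lambda>h. Df x h + Dg x h)) (at x)"
      using Df Dg by (auto intro: has_derivative_add)
    then show "((\<lambda>x. f x + g x) has_derivative blinfun_apply (Df x + Dg x)) (at x)"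
      by (simp add: plus_blinfun.rep_eq[abs_def])
  qed (use Df Dg in \<open>auto intro: continuous_on_add\<close>)
qed

lemma C1_bilinear:
  assumes bb: "bounded_bilinear pr" and f: "C1 U f" and g: "C1 U g"
  shows "C1 U (\<lambda>x. pr (f x) (g x))"
proof -
  interpret bounded_bilinear pr by fact
  from f obtain Df where Df: "\<forall>x\<in>U. (f has_derivative blinfun_apply (Df x)) (at x)" "continuous_on U Df"
    unfolding C1_def by blast
  from g obtain Dg where Dg: "\<forall>x\<in>U. (g has_derivative blinfun_apply (Dg x)) (at x)" "continuous_on U Dg"
    unfolding C1_def by blast
  have cf: "continuous_on U f" "continuous_on U g" using C1_cont f g by auto
  let ?D = "\<lambda>x. (prod_right (f x) o\<^sub>L Dg x) + (prod_left (g x) o\<^sub>L Df x)"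
  show ?thesis unfolding C1_def
  proof (intro exI[of _ ?D] conjI ballI)
    fix x assume "x\<in>U"
    have "((\<lambda>x. pr (f x) (g x)) has_derivative (\<lambda>h. pr (f x) (Dg x h) + pr (Df x h) (g x))) (at x)"
      by (rule FDERIV) (use Df Dg \<open>x\<in>U\<close> in auto)
    moreover have "blinfun_apply (?D x) = (\<lambda>h. pr (f x) (Dg x h) + pr (Df x h) (g x))"
      by (intro ext) (simp add: blinfun.add_left)
    ultimately show "((\<lambda>x. pr (f x) (g x)) has_derivative blinfun_apply (?D x)) (at x)" by simp
  next
    have c1: "continuous_on U (\<lambda>x. prod_right (f x))"
      by (rule bounded_linear.continuous_on[OF bounded_linear_prod_right cf(1)])
    have c2: "continuous_on U (\<lambda>x. prod_left (g x))"
      by (rule bounded_linear.continuous_on[OF bounded_linear_prod_left cf(2)])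
    show "continuous_on U ?D"
      by (intro continuous_on_add
          bounded_bilinear.continuous_on[OF bounded_bilinear_blinfun_compose] c1 c2 Df Dg)
  qed
qed

lemma C1_chain:
  assumes g: "C1 V g" and f: "C1 U f" and sub: "f ` U \<subseteq> V"
  shows "C1 U (\<lambda>x. g (f x))"
proof -
  from f obtain Df where Df: "\<forall>x\<in>U. (f has_derivative blinfun_apply (Df x)) (at x)" "continuous_on U Df"
    unfolding C1_def by blast
  from g obtain Dg where Dg: "\<forall>x\<in>V. (g has_derivative blinfun_apply (Dg x)) (at x)" "continuous_on V Dg"
    unfolding C1_def by blast
  have cf: "continuous_on U f" using C1_cont f by auto
  let ?D = "\<lambda>x. Dg (f x) o\<^sub>L Df x"
  show ?thesis unfolding C1_def
  proof (intro exI[of _ ?D] conjI ballI)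
    fix x assume "x\<in>U"
    then have fx: "f x \<in> V" using sub by blast
    have "((g \<circ> f) has_derivative (blinfun_apply (Dg (f x)) \<circ> blinfun_apply (Df x))) (at x)"
      by (rule diff_chain_at) (use Df Dg fx \<open>x\<in>U\<close> in blast)+
    moreover have "blinfun_apply (?D x) = (\<lambda>h. Dg (f x) (Df x h))" by (intro ext) simp
    ultimately show "((\<lambda>x. g (f x)) has_derivative blinfun_apply (?D x)) (at x)"
      by (simp add: o_def)
  next
    have "continuous_on U (\<lambda>x. Dg (f x))"
      using continuous_on_compose[OF cf continuous_on_subset[OF Dg(2) sub]] by (simp add: o_def)
    then show "continuous_on U ?D"
      by (rule bounded_bilinear.continuous_on[OF bounded_bilinear_blinfun_compose _ Df(2)])
  qed
qed

lemma C2_imp_C1: "C2 U f \<Longrightarrow> C1 U f"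
proof -
  assume "C2 U f"
  then obtain Df where a: "\<forall>x\<in>U. (f has_derivative blinfun_apply (Df x)) (at x)" and b: "C1 U Df"
    unfolding C2_def by blast
  have "continuous_on U Df" by (rule C1_cont[OF b])
  then show ?thesis unfolding C1_def using a by (intro exI[of _ Df] conjI) auto
qed

lemma C2_add:
  assumes "C2 U f" "C2 U g" shows "C2 U (\<lambda>x. f x + g x)"
proof -
  from assms obtain Df Dg where Df: "\<forall>x\<in>U. (f has_derivative blinfun_apply (Df x)) (at x)" "C1 U Df"
    and Dg: "\<forall>x\<in>U. (g has_derivative blinfun_apply (Dg x)) (at x)" "C1 U Dg"
    unfolding C2_def by blast
  show ?thesis unfolding C2_def
  proof (intro exI[of _ "\<lambda>x. Df x + Dg x"] conjI ballI)
    fix x assume "x \<in> U"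
    then have "((\<lambda>x. f x + g x) has_derivative (\<lambda>h. Df x h + Dg x h)) (at x)"
      using Df Dg by (auto intro: has_derivative_add)
    then show "((\<lambda>x. f x + g x) has_derivative blinfun_apply (Df x + Dg x)) (at x)"
      by (simp add: plus_blinfun.rep_eq[abs_def])
  qed (use Df Dg in \<open>auto intro: C1_add\<close>)
qed

lemma C2_bilinear:
  assumes bb: "bounded_bilinear pr" and f: "C2 U f" and g: "C2 U g"
  shows "C2 U (\<lambda>x. pr (f x) (g x))"
proof -
  interpret bounded_bilinear pr by fact
  from f obtain Df where Df: "\<forall>x\<in>U. (f has_derivative blinfun_apply (Df x)) (at x)" "C1 U Df"
    unfolding C2_def by blast
  from g obtain Dg where Dg: "\<forall>x\<in>U. (g has_derivative blinfun_apply (Dg x)) (at x)" "C1 U Dg"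
    unfolding C2_def by blast
  let ?D = "\<lambda>x. (prod_right (f x) o\<^sub>L Dg x) + (prod_left (g x) o\<^sub>L Df x)"
  show ?thesis unfolding C2_def
  proof (intro exI[of _ ?D] conjI ballI)
    fix x assume "x\<in>U"
    have "((\<lambda>x. pr (f x) (g x)) has_derivative (\<lambda>h. pr (f x) (Dg x h) + pr (Df x h) (g x))) (at x)"
      by (rule FDERIV) (use Df Dg \<open>x\<in>U\<close> in auto)
    moreover have "blinfun_apply (?D x) = (\<lambda>h. pr (f x) (Dg x h) + pr (Df x h) (g x))"
      by (intro ext) (simp add: blinfun.add_left)
    ultimately show "((\<lambda>x. pr (f x) (g x)) has_derivative blinfun_apply (?D x)) (at x)" by simp
  next
    have c1: "C1 U (\<lambda>x. prod_right (f x))"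
      by (rule C1_chain[OF C1_linear[OF bounded_linear_prod_right] C2_imp_C1[OF f]]) auto
    have c2: "C1 U (\<lambda>x. prod_left (g x))"
      by (rule C1_chain[OF C1_linear[OF bounded_linear_prod_left] C2_imp_C1[OF g]]) auto
    show "C1 U ?D"
      by (intro C1_add C1_bilinear[OF bounded_bilinear_blinfun_compose] c1 c2 Df Dg)
  qed
qed

lemma C2_chain:
  assumes g: "C2 V g" and f: "C2 U f" and sub: "f ` U \<subseteq> V"
  shows "C2 U (\<lambda>x. g (f x))"
proof -
  from f obtain Df where Df: "\<forall>x\<in>U. (f has_derivative blinfun_apply (Df x)) (at x)" "C1 U Df"
    unfolding C2_def by blast
  from g obtain Dg where Dg: "\<forall>x\<in>V. (g has_derivative blinfun_apply (Dg x)) (at x)" "C1 V Dg"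
    unfolding C2_def by blast
  let ?D = "\<lambda>x. Dg (f x) o\<^sub>L Df x"
  show ?thesis unfolding C2_def
  proof (intro exI[of _ ?D] conjI ballI)
    fix x assume "x\<in>U"
    then have fx: "f x \<in> V" using sub by blast
    have "((g \<circ> f) has_derivative (blinfun_apply (Dg (f x)) \<circ> blinfun_apply (Df x))) (at x)"
      by (rule diff_chain_at) (use Df Dg fx \<open>x\<in>U\<close> in blast)+
    moreover have "blinfun_apply (?D x) = (\<lambda>h. Dg (f x) (Df x h))" by (intro ext) simp
    ultimately show "((\<lambda>x. g (f x)) has_derivative blinfun_apply (?D x)) (at x)"
      by (simp add: o_def)
  next
    have "C1 U (\<lambda>x. Dg (f x))"
      by (rule C1_chain[OF Dg(2) C2_imp_C1[OF f] sub])
    then show "C1 U ?D"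
      by (intro C1_bilinear[OF bounded_bilinear_blinfun_compose] Df)
  qed
qed

lemma C2_cong:
  assumes U: "open U" and eq: "\<And>x. x \<in> U \<Longrightarrow> f x = g x" and g: "C2 U g"
  shows "C2 U f"
proof -
  from g obtain Dg where Dg: "\<forall>x\<in>U. (g has_derivative blinfun_apply (Dg x)) (at x)" "C1 U Dg"
    unfolding C2_def by blast
  have "\<forall>x\<in>U. (f has_derivative blinfun_apply (Dg x)) (at x)"
  proof
    fix x assume "x \<in> U"
    show "(f has_derivative blinfun_apply (Dg x)) (at x)"
      by (rule has_derivative_transform_within_open[OF _ U \<open>x\<in>U\<close>])
         (use Dg \<open>x\<in>U\<close> eq in auto)
  qed
  then show ?thesis using Dg unfolding C2_def by blast
qed

lemma C2_subset: "C2 V f \<Longrightarrow> U \<subseteq> V \<Longrightarrow> C2 U f"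
  unfolding C2_def C1_def by (meson continuous_on_subset subsetD)

lemma C1_real:
  assumes "\<forall>x\<in>V. (\<phi> has_real_derivative \<phi>' x) (at x)" "continuous_on V \<phi>'"
  shows "C1 V \<phi>"
  unfolding C1_def
proof (intro exI[of _ "\<lambda>x. blinfun_mult_right (\<phi>' x)"] conjI ballI)
  fix x assume "x \<in> V"
  then show "(\<phi> has_derivative blinfun_apply (blinfun_mult_right (\<phi>' x))) (at x)"
    using assms by (auto intro: has_field_derivative_imp_has_derivative)
qed (rule bounded_linear.continuous_on[OF bounded_linear_blinfun_mult_right assms(2)])

lemma C2_real:
  assumes "\<forall>x\<in>V. (\<phi> has_real_derivative \<phi>' x) (at x)"
    "\<forall>x\<in>V. (\<phi>' has_real_derivative \<phi>'' x) (at x)" "continuous_on V \<phi>''"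
  shows "C2 V \<phi>"
  unfolding C2_def
proof (intro exI[of _ "\<lambda>x. blinfun_mult_right (\<phi>' x)"] conjI ballI)
  fix x assume "x \<in> V"
  then show "(\<phi> has_derivative blinfun_apply (blinfun_mult_right (\<phi>' x))) (at x)"
    using assms by (auto intro: has_field_derivative_imp_has_derivative)
next
  show "C1 V (\<lambda>x. blinfun_mult_right (\<phi>' x))"
    by (rule C1_chain[OF C1_linear[OF bounded_linear_blinfun_mult_right] C1_real[OF assms(2,3)]]) auto
qed

lemma C2_mult:
  fixes f g :: "'a::real_normed_vector \<Rightarrow> real"
  shows "C2 U f \<Longrightarrow> C2 U g \<Longrightarrow> C2 U (\<lambda>x. f x * g x)"
  by (rule C2_bilinear[OF bounded_bilinear_mult])

lemma C2_scaleR: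
  fixes f :: "'a::real_normed_vector \<Rightarrow> real"
  shows "C2 U f \<Longrightarrow> C2 U g \<Longrightarrow> C2 U (\<lambda>x. f x *\<^sub>R g x)"
  by (rule C2_bilinear[OF bounded_bilinear_scaleR])

lemma C2_sum:
  assumes "finite I" "\<And>i. i \<in> I \<Longrightarrow> C2 U (f i)"
  shows "C2 U (\<lambda>x. \<Sum>i\<in>I. f i x)"
  using assms by (induction I rule: finite_induct) (auto intro: C2_const C2_add)

lemma C2_prod:
  fixes f :: "'i \<Rightarrow> 'a::real_normed_vector \<Rightarrow> real"
  assumes "finite I" "\<And>i. i \<in> I \<Longrightarrow> C2 U (f i)"
  shows "C2 U (\<lambda>x. \<Prod>i\<in>I. f i x)"
  using assms by (induction I rule: finite_induct) (auto intro: C2_const C2_mult)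

lemma C2_uminus: "C2 U f \<Longrightarrow> C2 U (\<lambda>x. - f x)"
  using C2_chain[OF C2_linear[OF bounded_linear_minus[OF bounded_linear_ident]], of U f UNIV] by auto

lemma C2_diff: "C2 U f \<Longrightarrow> C2 U g \<Longrightarrow> C2 U (\<lambda>x. f x - g x)"
  using C2_add[OF _ C2_uminus, of U f g] by simp

lemma C2_inverse_real: "C2 {x::real. x \<noteq> 0} inverse"
proof (rule C2_real[where \<phi>' = "\<lambda>x. - inverse (x^2)" and \<phi>'' = "\<lambda>x. 2 * inverse (x^3)"])
  show "\<forall>x\<in>{x::real. x \<noteq> 0}. (inverse has_real_derivative - inverse (x^2)) (at x)"
    by (auto intro!: derivative_eq_intros simp: power2_eq_square)
  show "\<forall>x\<in>{x::real. x \<noteq> 0}. ((\<lambda>x. - inverse (x^2)) has_real_derivative 2 * inverse (x^3)) (at x)"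
    by (auto intro!: derivative_eq_intros simp: field_simps power2_eq_square power3_eq_cube)
  show "continuous_on {x::real. x \<noteq> 0} (\<lambda>x. 2 * inverse (x ^ 3))"
    by (intro continuous_intros) auto
qed

lemma C2_divide:
  fixes f g :: "'a::real_normed_vector \<Rightarrow> real"
  assumes "C2 U f" "C2 U g" "\<And>x. x \<in> U \<Longrightarrow> g x \<noteq> 0"
  shows "C2 U (\<lambda>x. f x / g x)"
proof -
  have "C2 U (\<lambda>x. inverse (g x))"
    by (rule C2_chain[OF C2_inverse_real assms(2)]) (use assms(3) in auto)
  from C2_mult[OF assms(1) this] show ?thesis by (simp add: divide_inverse)
qed

lemma C2_sqrt_real: "C2 {x::real. x > 0} sqrt"
proof (rule C2_real[where \<phi>' = "\<lambda>x. inverse (sqrt x) / 2" and \<phi>'' = "\<lambda>x. - inverse (sqrt x ^ 3) / 4"])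
  show "\<forall>x\<in>{x::real. x > 0}. (sqrt has_real_derivative inverse (sqrt x) / 2) (at x)"
    by (auto intro!: derivative_eq_intros)
  show "\<forall>x\<in>{x::real. x > 0}. ((\<lambda>x. inverse (sqrt x) / 2) has_real_derivative - inverse (sqrt x ^ 3) / 4) (at x)"
  proof
    fix x :: real assume "x \<in> {x. x > 0}"
    then have x: "x > 0" by simp
    show "((\<lambda>x. inverse (sqrt x) / 2) has_real_derivative - inverse (sqrt x ^ 3) / 4) (at x)"
      using x by (auto intro!: derivative_eq_intros simp: field_simps power3_eq_cube)
  qed
  show "continuous_on {x::real. x > 0} (\<lambda>x. - inverse (sqrt x ^ 3) / 4)"
    by (intro continuous_intros) auto
qed

fun mpow :: "'a::comm_ring_1^'n^'n \<Rightarrow> nat \<Rightarrow> 'a^'n^'n" where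
  "mpow M 0 = mat 1" | "mpow M (Suc k) = M ** mpow M k"

lemma cmat_mult: "cmat (A ** B) = cmat A ** cmat B"
  by (simp add: cmat_def matrix_matrix_mult_def vec_eq_iff)

lemma cmat_one: "cmat (mat 1) = mat 1"
  by (simp add: cmat_def mat_def vec_eq_iff)

lemma cmat_mpow: "cmat (mpow M k) = mpow (cmat M) k"
  by (induction k) (simp_all add: cmat_one cmat_mult)

lemma mpow_bound:
  fixes C :: "complex^'n^'n"
  shows "cmod (mpow C k $ i $ j) \<le> (\<Sum>a\<in>UNIV. \<Sum>b\<in>UNIV. cmod (C$a$b)) ^ k"
proof (induction k arbitrary: i j)
  case 0
  then show ?case by (simp add: mat_def)
next
  case (Suc k)
  let ?m = "\<Sum>a\<in>UNIV. \<Sum>b\<in>UNIV. cmod (C$a$b)"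
  have row: "(\<Sum>c\<in>UNIV. cmod (C$i$c)) \<le> ?m"
    by (rule member_le_sum[of i UNIV "\<lambda>a. \<Sum>b\<in>UNIV. cmod (C$a$b)"]) (auto intro: sum_nonneg)
  have "cmod (mpow C (Suc k) $ i $ j) = cmod (\<Sum>c\<in>UNIV. C$i$c * mpow C k $ c $ j)"
    by (simp add: matrix_matrix_mult_def)
  also have "\<dots> \<le> (\<Sum>c\<in>UNIV. cmod (C$i$c) * cmod (mpow C k $ c $ j))"
    by (rule order_trans[OF norm_sum]) (simp add: norm_mult)
  also have "\<dots> \<le> (\<Sum>c\<in>UNIV. cmod (C$i$c) * ?m ^ k)"
    by (intro sum_mono mult_left_mono Suc.IH) auto
  also have "\<dots> = (\<Sum>c\<in>UNIV. cmod (C$i$c)) * ?m ^ k"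
    by (simp add: sum_distrib_right)
  also have "\<dots> \<le> ?m * ?m ^ k"
    by (intro mult_right_mono row) (simp add: sum_nonneg)
  finally show ?case by simp
qed

lemma sum_mat:
  "(\<Sum>k\<in>UNIV. (mat c :: 'a::comm_ring_1^'n^'n) $ i $ k * f k) = c * f i"
proof -
  have "(mat c :: 'a::comm_ring_1^'n^'n) $ i $ k * f k = (if k = i then c * f i else 0)" for k
    by (auto simp: mat_def)
  then show ?thesis by simp
qed

definition Dz :: "complex^'n^'n \<Rightarrow> complex \<Rightarrow> complex^'n^'n" where
  "Dz C z = mat 1 - (\<chi> a b. z * C$a$b)"

definition fent :: "complex^'n^'n \<Rightarrow> 'n \<Rightarrow> 'n \<Rightarrow> complex \<Rightarrow> complex" where
  "fent C i j z = det (\<chi> a b. if b = i then (\<chi> a. if a = j then 1 else 0) $ a else Dz C z $ a $ b) / det (Dz C z)"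

lemma holo_det:
  assumes "\<And>a b. (\<lambda>z. F z $ a $ b) holomorphic_on S"
  shows "(\<lambda>z. det (F z)) holomorphic_on S"
  unfolding det_def by (intro holomorphic_intros assms)

lemma fent_holo:
  assumes "\<And>z. z \<in> S \<Longrightarrow> det (Dz C z) \<noteq> 0"
  shows "fent C i j holomorphic_on S"
proof -
  have h: "(\<lambda>z. Dz C z $ a $ b) holomorphic_on S" for a b
    unfolding Dz_def by (auto simp: mat_def intro!: holomorphic_intros)
  have h2: "(\<lambda>z. (\<chi> a b. if b = i then (\<chi> a. if a = j then 1 else 0) $ a else Dz C z $ a $ b) $ a $ b) holomorphic_on S" for a b
    by (cases "b = i") (simp_all add: h holomorphic_on_const)
  show ?thesis
    unfolding fent_def
    by (intro holomorphic_on_divide holo_det h2 h assms)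
qed

lemma Neumann:
  fixes C :: "complex^'n^'n"
  defines "m \<equiv> (\<Sum>a\<in>UNIV. \<Sum>b\<in>UNIV. cmod (C$a$b))"
  assumes z: "cmod z * m < 1"
  shows "summable (\<lambda>n. z^n * mpow C n $ a $ b)"
    and "Dz C z ** (\<chi> a b. \<Sum>n. z^n * mpow C n $ a $ b) = mat 1"
proof -
  have m0: "m \<ge> 0" unfolding m_def by (intro sum_nonneg) auto
  have sm: "summable (\<lambda>n. z^n * mpow C n $ a $ b)" for a b
  proof (rule summable_comparison_test'[where g = "\<lambda>n. (cmod z * m)^n"])
    show "summable (\<lambda>n. (cmod z * m)^n)"
      using z m0 by (intro summable_geometric) auto
    show "norm (z^n * mpow C n $ a $ b) \<le> (cmod z * m)^n" for n
      using mpow_bound[of C n a b] unfolding m_def[symmetric]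
      by (simp add: norm_mult norm_power power_mult_distrib mult_left_mono)
  qed
  then show "summable (\<lambda>n. z^n * mpow C n $ a $ b)" .
  have sm': "summable (\<lambda>n. z^n * mpow C (Suc n) $ a $ b)" for a b
  proof (rule summable_comparison_test'[where g = "\<lambda>n. m * (cmod z * m)^n"])
    show "summable (\<lambda>n. m * (cmod z * m)^n)"
      using z m0 by (intro summable_mult summable_geometric) auto
    show "norm (z^n * mpow C (Suc n) $ a $ b) \<le> m * (cmod z * m)^n" for n
    proof -
      have "norm (z^n * mpow C (Suc n) $ a $ b) \<le> cmod z ^ n * m ^ Suc n"
        using mpow_bound[of C "Suc n" a b] unfolding m_def[symmetric]
        by (simp add: norm_mult norm_power mult_left_mono del: mpow.simps)
      also have "\<dots> = m * (cmod z * m)^n" by (simp add: power_mult_distrib)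
      finally show ?thesis .
    qed
  qed
  let ?S = "(\<chi> a b. \<Sum>n. z^n * mpow C n $ a $ b) :: complex^'n^'n"
  show "Dz C z ** ?S = mat 1"
    unfolding vec_eq_iff
  proof (intro allI)
    fix i j
    have "(\<Sum>k\<in>UNIV. C$i$k * ?S$k$j) = (\<Sum>k\<in>UNIV. \<Sum>n. C$i$k * (z^n * mpow C n $ k $ j))"
      by (intro sum.cong refl) (simp add: suminf_mult[OF sm])
    also have "\<dots> = (\<Sum>n. \<Sum>k\<in>UNIV. C$i$k * (z^n * mpow C n $ k $ j))"
      by (rule suminf_sum[symmetric]) (intro summable_mult sm)
    also have "\<dots> = (\<Sum>n. z^n * mpow C (Suc n) $ i $ j)"
      by (intro suminf_cong) (simp add: matrix_matrix_mult_def sum_distrib_left algebra_simps)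
    finally have e1: "(\<Sum>k\<in>UNIV. C$i$k * ?S$k$j) = (\<Sum>n. z^n * mpow C (Suc n) $ i $ j)" .
    have "z * (\<Sum>n. z^n * mpow C (Suc n) $ i $ j) = (\<Sum>n. z^(Suc n) * mpow C (Suc n) $ i $ j)"
      by (subst suminf_mult[symmetric]) (use sm' in \<open>auto simp: algebra_simps\<close>)
    also have "\<dots> = ?S$i$j - mpow C 0 $ i $ j"
      using suminf_split_head[OF sm[of i j]] by simp
    finally have e2: "z * (\<Sum>n. z^n * mpow C (Suc n) $ i $ j) = ?S$i$j - mat 1 $ i $ j" by simp
    have "(Dz C z ** ?S) $ i $ j = (\<Sum>k\<in>UNIV. (mat 1 $ i $ k - z * C$i$k) * ?S$k$j)"
      by (simp add: Dz_def matrix_matrix_mult_def)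
    also have "\<dots> = (\<Sum>k\<in>UNIV. mat 1 $ i $ k * ?S$k$j) - z * (\<Sum>k\<in>UNIV. C$i$k * ?S$k$j)"
      by (simp add: algebra_simps sum_subtractf sum_distrib_left)
    also have "(\<Sum>k\<in>UNIV. mat 1 $ i $ k * ?S$k$j) = ?S$i$j"
      using sum_mat[of 1 i "\<lambda>k. ?S$k$j"] by simp
    finally show "(Dz C z ** ?S) $ i $ j = mat 1 $ i $ j"
      using e1 e2 by simp
  qed
qed

lemma det_Dz_nonzero:
  fixes C :: "complex^'n^'n"
  assumes roots: "\<forall>l. det (mat l - C) = 0 \<longrightarrow> cmod l < r" and r: "r > 0"
    and z: "cmod z < 1 / r"
  shows "det (Dz C z) \<noteq> 0"
proof (cases "z = 0")
  case True
  have "(\<chi> a b. (0::complex)) = (0::complex^'n^'n)" by (simp add: vec_eq_iff)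
  then show ?thesis using True by (simp add: Dz_def)
next
  case False
  have eq: "Dz C z = mat z ** (mat (1/z) - C)"
    unfolding vec_eq_iff
  proof (intro allI)
    fix a b
    have "(mat z ** (mat (1/z) - C)) $ a $ b = z * ((mat (1/z) - C) $ a $ b)"
      unfolding matrix_matrix_mult_def by (simp add: sum_mat)
    also have "\<dots> = Dz C z $ a $ b"
      using False by (simp add: Dz_def mat_def right_diff_distrib)
    finally show "Dz C z $ a $ b = (mat z ** (mat (1/z) - C)) $ a $ b" by simp
  qed
  have dm: "det (mat z :: complex^'n^'n) = z ^ CARD('n)"
    by (subst det_diagonal) (auto simp: mat_def)
  show ?thesis
  proof
    assume "det (Dz C z) = 0"
    then have "det (mat (1/z) - C) = 0"
      using False by (simp add: eq det_mul dm)
    then have "cmod (1/z) < r" using roots by blast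
    then have "1 < r * cmod z" using False by (simp add: norm_divide field_simps)
    moreover have "r * cmod z < 1" using z r by (simp add: field_simps)
    ultimately show False by simp
  qed
qed

lemma mpow_summable:
  fixes C :: "complex^'n^'n"
  assumes r1: "r < 1" and roots: "\<forall>l. det (mat l - C) = 0 \<longrightarrow> cmod l \<le> r"
  shows "summable (\<lambda>k. mpow C k $ i $ j)"
proof -
  define r' where "r' = (max r 0 + 1) / 2"
  have r'0: "r' > 0" and r'1: "r' < 1" using r1 by (auto simp: r'_def)
  have roots': "\<forall>l. det (mat l - C) = 0 \<longrightarrow> cmod l < r'"
    using roots r1 by (force simp: r'_def)
  define R where "R = 1 / r'"
  have R1: "R > 1" using r'0 r'1 by (simp add: R_def field_simps)
  have nz: "det (Dz C z) \<noteq> 0" if "z \<in> ball 0 R" for z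
    using det_Dz_nonzero[OF roots' r'0, of z] that by (simp add: R_def)
  have holo: "fent C i j holomorphic_on ball 0 R"
    by (rule fent_holo) (use nz in auto)
  define m where "m = (\<Sum>a\<in>UNIV. \<Sum>b\<in>UNIV. cmod (C$a$b))"
  have m0: "m \<ge> 0" unfolding m_def by (intro sum_nonneg) auto
  define \<rho> where "\<rho> = min R (1 / (m + 1))"
  have \<rho>0: "\<rho> > 0" using R1 m0 by (simp add: \<rho>_def)
  have small: "fent C i j z = (\<Sum>n. mpow C n $ i $ j * z^n)" if z: "cmod z < \<rho>" for z
  proof -
    have zm: "cmod z * m < 1"
    proof -
      have "cmod z * m \<le> cmod z * (m + 1)" by (simp add: mult_left_mono)
      also have "\<dots> < 1" using z m0 by (simp add: \<rho>_def field_simps)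
      finally show ?thesis .
    qed
    let ?S = "(\<chi> a b. \<Sum>n. z^n * mpow C n $ a $ b) :: complex^'n^'n"
    have inv: "Dz C z ** ?S = mat 1" using Neumann(2)[of z C] zm unfolding m_def by simp
    have d: "det (Dz C z) \<noteq> 0" using nz[of z] z by (simp add: \<rho>_def)
    have col: "Dz C z *v (\<chi> a. ?S $ a $ j) = (\<chi> a. if a = j then 1 else 0)"
    proof -
      have "Dz C z *v (\<chi> a. ?S $ a $ j) = (\<chi> a. (Dz C z ** ?S) $ a $ j)"
        by (simp add: matrix_vector_mult_def matrix_matrix_mult_def)
      then show ?thesis by (simp add: inv mat_def)
    qed
    have "(\<chi> a. ?S $ a $ j) = (\<chi> k. det (\<chi> a b. if b = k then (\<chi> a. if a = j then 1 else 0) $ a else Dz C z $ a $ b) / det (Dz C z))"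
      using cramer[OF d] col by blast
    from arg_cong[OF this, of "\<lambda>v. v $ i"] have "?S $ i $ j = fent C i j z"
      unfolding fent_def by simp
    then show ?thesis by (simp add: mult.commute)
  qed
  define F where "F = Abs_fps (\<lambda>n. mpow C n $ i $ j)"
  have conv: "fps_conv_radius F > 0"
  proof -
    have "summable (\<lambda>n. fps_nth F n * (of_real (\<rho>/2))^n)"
    proof -
      have "cmod (of_real (\<rho>/2)) * m < 1"
      proof -
        have "cmod (of_real (\<rho>/2)) * m \<le> (\<rho>/2) * (m + 1)" using \<rho>0 m0 by (simp add: mult_left_mono)
        also have "\<dots> < 1" using \<rho>0 m0 unfolding \<rho>_def by (auto simp: field_simps min_def)
        finally show ?thesis .
      qed
      from Neumann(1)[of "of_real (\<rho>/2)" C i j] this show ?thesis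
        by (simp add: F_def m_def mult.commute)
    qed
    from conv_radius_geI[OF this] have "fps_conv_radius F \<ge> \<rho>/2"
      using \<rho>0 by (simp add: fps_conv_radius_def)
    then show ?thesis using \<rho>0 by (metis ereal_less(2) half_gt_zero order_less_le_trans zero_ereal_def)
  qed
  have ev: "eventually (\<lambda>z. eval_fps F z = fent C i j z) (nhds 0)"
  proof -
    have "eventually (\<lambda>z. z \<in> ball 0 \<rho>) (nhds (0::complex))"
      using \<rho>0 by (intro eventually_nhds_in_open) auto
    then show ?thesis
      by eventually_elim (simp add: small eval_fps_def F_def)
  qed
  have exp: "fent C i j has_fps_expansion F"
    unfolding has_fps_expansion_def using conv ev by simp
  have coef: "mpow C n $ i $ j = (deriv ^^ n) (fent C i j) 0 / fact n" for n
    using fps_nth_fps_expansion[OF exp, of n] by (simp add: F_def)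
  have "(\<lambda>n. (deriv ^^ n) (fent C i j) 0 / fact n * (1 - 0)^n) sums fent C i j 1"
    by (rule holomorphic_power_series[OF holo]) (use R1 in auto)
  then have "(\<lambda>n. mpow C n $ i $ j) sums fent C i j 1"
    by (simp add: coef)
  then show ?thesis by (rule sums_summable)
qed

lemma mpow_tendsto_zero:
  fixes C :: "complex^'n^'n"
  assumes r1: "r < 1" and roots: "\<forall>l. det (mat l - C) = 0 \<longrightarrow> cmod l \<le> r"
  shows "(\<lambda>k. mpow C k $ i $ j) \<longlonglongrightarrow> 0"
  using summable_LIMSEQ_zero[OF mpow_summable[OF assms]] .

definition charp :: "complex^'n^'n \<Rightarrow> complex poly" where
  "charp C = (\<Sum>p\<in>{p. p permutes (UNIV::'n set)}.
      smult (of_int (sign p)) (\<Prod>i\<in>UNIV. [:- C$i$(p i), (if i = p i then 1 else 0):]))"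

lemma poly_charp: "poly (charp C) l = det (mat l - C)"
  unfolding charp_def det_def
  by (auto simp: poly_sum poly_prod mat_def intro!: sum.cong prod.cong)

lemma coeff_charp: "coeff (charp (C::complex^'n^'n)) CARD('n) = 1"
proof -
  let ?P = "{p. p permutes (UNIV::'n set)}"
  let ?f = "\<lambda>p. \<Prod>i\<in>UNIV. [:- C$i$(p i), (if i = p i then 1 else 0):]"
  have id: "coeff (?f id) CARD('n) = 1"
  proof -
    have nz: "\<forall>i\<in>UNIV. [:- C$i$(id i), (if i = id i then 1 else 0):] \<noteq> 0" by simp
    have "degree (?f id) = CARD('n)"
      by (subst degree_prod_eq_sum_degree[OF nz]) simp
    moreover have "lead_coeff (?f id) = 1"
      by (simp add: lead_coeff_prod)
    ultimately show ?thesis by simp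
  qed
  have other: "coeff (?f p) CARD('n) = 0" if "p \<noteq> id" for p
  proof -
    from that obtain i0 where i0: "p i0 \<noteq> i0" by (metis eq_id_iff)
    have "degree (?f p) \<le> (\<Sum>i\<in>UNIV. (degree \<circ> (\<lambda>i. [:- C$i$(p i), (if i = p i then 1 else 0):])) i)"
      by (rule degree_prod_sum_le) simp
    also have "\<dots> < CARD('n)"
    proof -
      have le1: "(degree \<circ> (\<lambda>i. [:- C$i$(p i), (if i = p i then 1 else 0):])) i \<le> 1" for i
        by simp
      have "(\<Sum>i\<in>UNIV. (degree \<circ> (\<lambda>i. [:- C$i$(p i), (if i = p i then 1 else 0):])) i)
          < (\<Sum>i\<in>(UNIV::'n set). 1)"
        by (rule sum_strict_mono_ex1) (use le1 i0 in \<open>auto intro!: exI[of _ i0]\<close>)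
      then show ?thesis by simp
    qed
    finally show ?thesis by (simp add: coeff_eq_0)
  qed
  have idP: "id \<in> ?P" by (simp add: permutes_id)
  have "coeff (charp C) CARD('n) = (\<Sum>p\<in>?P. of_int (sign p) * coeff (?f p) CARD('n))"
    unfolding charp_def by (simp add: coeff_sum)
  also have "\<dots> = of_int (sign (id::'n\<Rightarrow>'n)) * coeff (?f id) CARD('n)"
    by (rule sum.remove[OF _ idP, THEN trans]) (auto simp: other)
  also have "\<dots> = 1" using id by (simp add: sign_id)
  finally show ?thesis .
qed

lemma charp_nonzero: "charp (C::complex^'n^'n) \<noteq> 0"
  using coeff_charp[of C] by auto

lemma degree_charp: "degree (charp (C::complex^'n^'n)) \<ge> 1"
proof -
  have "CARD('n) \<le> degree (charp C)"
    by (rule le_degree) (simp add: coeff_charp)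
  moreover have "CARD('n) \<ge> 1" using card_gt_0_iff[of "UNIV::'n set"] by auto
  ultimately show ?thesis by linarith
qed

lemma roots_finite: "finite {l. det (mat l - (C::complex^'n^'n)) = 0}"
  using poly_roots_finite[OF charp_nonzero[of C]] by (simp add: poly_charp)

lemma roots_nonempty: "\<exists>l. det (mat l - (C::complex^'n^'n)) = 0"
proof -
  have "\<not> constant (poly (charp C))"
    using degree_charp[of C] by (simp add: constant_degree)
  from fundamental_theorem_of_algebra[OF this] show ?thesis by (auto simp: poly_charp)
qed

lemma spec_rad_set: "{cmod l | l. det (mat l - cmat M) = 0} = cmod ` {l. det (mat l - cmat M) = 0}"
  by auto

lemma spec_rad_ge: "det (mat l - cmat M) = 0 \<Longrightarrow> cmod l \<le> spec_rad M"
  unfolding spec_rad_def spec_rad_set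
  by (rule Max_ge) (auto intro: roots_finite)

lemma spec_rad_lt_iff: "spec_rad M < 1 \<longleftrightarrow> (\<forall>l. det (mat l - cmat M) = 0 \<longrightarrow> cmod l < 1)"
proof
  assume "spec_rad M < 1"
  then show "\<forall>l. det (mat l - cmat M) = 0 \<longrightarrow> cmod l < 1"
    using spec_rad_ge by fastforce
next
  assume a: "\<forall>l. det (mat l - cmat M) = 0 \<longrightarrow> cmod l < 1"
  have "spec_rad M \<in> cmod ` {l. det (mat l - cmat M) = 0}"
    unfolding spec_rad_def spec_rad_set
    by (rule Max_in) (use roots_finite roots_nonempty in auto)
  then show "spec_rad M < 1" using a by auto
qed

lemma mpow_real_tendsto_zero:
  assumes "spec_rad M < 1"
  shows "(\<lambda>k. mpow M k $ i $ j) \<longlonglongrightarrow> 0"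
proof -
  have "(\<lambda>k. mpow (cmat M) k $ i $ j) \<longlonglongrightarrow> 0"
    by (rule mpow_tendsto_zero[OF assms]) (auto intro: spec_rad_ge)
  moreover have e: "mpow (cmat M) k $ i $ j = complex_of_real (mpow M k $ i $ j)" for k
    by (simp only: cmat_mpow[symmetric]) (simp add: cmat_def)
  ultimately have "(\<lambda>k. complex_of_real (mpow M k $ i $ j)) \<longlonglongrightarrow> of_real 0"
    by simp
  then show ?thesis by (simp only: tendsto_of_real_iff)
qed

lemma det_zero_kernel:
  fixes A :: "'a::field^'n^'n"
  assumes "det A = 0"
  shows "\<exists>x. x \<noteq> 0 \<and> A *v x = 0"
proof (rule ccontr)
  assume "\<not> ?thesis"
  then have "\<forall>x. A *v x = 0 \<longrightarrow> x = 0" by blast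
  then have "\<exists>B::'a^'n^'n. B ** A = mat 1" by (simp only: matrix_left_invertible_ker)
  then obtain B :: "'a^'n^'n" where B: "B ** A = mat 1" by blast
  then have "A ** B = mat 1" by (simp only: matrix_left_right_inverse)
  with B have "invertible A" unfolding invertible_def by blast
  then have "det A \<noteq> 0" using invertible_det_nz[of A] by simp
  then show False using assms by simp
qed

lemma root_bound:
  fixes C :: "complex^'n^'n"
  assumes "det (mat l - C) = 0"
  shows "cmod l \<le> (\<Sum>a\<in>UNIV. \<Sum>b\<in>UNIV. cmod (C$a$b))"
proof -
  obtain x where x: "x \<noteq> 0" "(mat l - C) *v x = 0" using det_zero_kernel[OF assms] by blast
  obtain i where i: "\<forall>k. cmod (x$k) \<le> cmod (x$i)"
  proof -
    have "Max (range (\<lambda>k. cmod (x$k))) \<in> range (\<lambda>k. cmod (x$k))" by (rule Max_in) auto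
    then obtain i where "Max (range (\<lambda>k. cmod (x$k))) = cmod (x$i)" by (metis rangeE)
    moreover have "cmod (x$k) \<le> Max (range (\<lambda>k. cmod (x$k)))" for k by (rule Max_ge) auto
    ultimately show ?thesis using that by metis
  qed
  have xi: "cmod (x$i) > 0"
  proof (rule ccontr)
    assume "\<not> cmod (x$i) > 0"
    then have "cmod (x$i) = 0" by simp
    then have "\<forall>k. x$k = 0" using i by (metis norm_le_zero_iff)
    then show False using x(1) by (simp add: vec_eq_iff)
  qed
  have "((mat l - C) *v x) $ i = 0" using x(2) by simp
  then have "l * x$i = (\<Sum>k\<in>UNIV. C$i$k * x$k)"
    by (simp add: matrix_vector_mult_def sum_subtractf left_diff_distrib sum_mat)
  then have "cmod l * cmod (x$i) = cmod (\<Sum>k\<in>UNIV. C$i$k * x$k)" by (metis norm_mult)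
  also have "\<dots> \<le> (\<Sum>k\<in>UNIV. cmod (C$i$k) * cmod (x$k))"
    by (rule order_trans[OF norm_sum]) (simp add: norm_mult)
  also have "\<dots> \<le> (\<Sum>k\<in>UNIV. cmod (C$i$k) * cmod (x$i))"
    by (intro sum_mono mult_left_mono) (use i in auto)
  also have "\<dots> = (\<Sum>k\<in>UNIV. cmod (C$i$k)) * cmod (x$i)" by (simp add: sum_distrib_right)
  finally have "cmod l \<le> (\<Sum>k\<in>UNIV. cmod (C$i$k))" using xi by simp
  also have "\<dots> \<le> (\<Sum>a\<in>UNIV. \<Sum>b\<in>UNIV. cmod (C$a$b))"
    by (rule member_le_sum[of i UNIV "\<lambda>a. \<Sum>b\<in>UNIV. cmod (C$a$b)"]) (auto intro: sum_nonneg)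
  finally show ?thesis .
qed

lemma tendsto_det:
  fixes X :: "nat \<Rightarrow> 'a::{real_normed_field}^'n^'n"
  assumes "\<And>i j. (\<lambda>n. X n $ i $ j) \<longlonglongrightarrow> Y $ i $ j"
  shows "(\<lambda>n. det (X n)) \<longlonglongrightarrow> det Y"
  unfolding det_def by (intro tendsto_intros assms)

lemma stable_open:
  fixes A :: "real^'n^'n" and B :: "real^'p^'n"
  shows "open {K::real^'n^'p. spec_rad (A - B ** K) < 1}"
proof -
  let ?T = "{K::real^'n^'p. \<exists>l. det (mat l - cmat (A - B ** K)) = 0 \<and> cmod l \<ge> 1}"
  have eq: "{K::real^'n^'p. spec_rad (A - B ** K) < 1} = - ?T"
    by (auto simp: spec_rad_lt_iff not_less)
  have "closed ?T"
    unfolding closed_sequential_limits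
  proof (intro allI impI, elim conjE)
    fix K :: "nat \<Rightarrow> real^'n^'p" and K0
    assume T: "\<forall>n. K n \<in> ?T" and lim: "K \<longlonglongrightarrow> K0"
    have "\<forall>n. \<exists>l. det (mat l - cmat (A - B ** K n)) = 0 \<and> cmod l \<ge> 1" using T by blast
    from choice[OF this] obtain l where l0: "\<forall>n. det (mat (l n) - cmat (A - B ** K n)) = 0 \<and> cmod (l n) \<ge> 1"
      by blast
    have l: "\<And>n. det (mat (l n) - cmat (A - B ** K n)) = 0" "\<And>n. cmod (l n) \<ge> 1"
      using l0 by auto
    define b where "b = (\<lambda>K::real^'n^'p. \<Sum>a\<in>UNIV. \<Sum>c\<in>UNIV. cmod (cmat (A - B ** K) $ a $ c))"
    have ent: "(\<lambda>n. K n $ k $ c) \<longlonglongrightarrow> K0 $ k $ c" for k c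
      using tendsto_vec_nth[OF tendsto_vec_nth[OF lim]] .
    have entl: "(\<lambda>n. (A - B ** K n) $ a $ c) \<longlonglongrightarrow> (A - B ** K0) $ a $ c" for a c
    proof -
      have "(\<lambda>n. A$a$c - (\<Sum>k\<in>UNIV. B$a$k * K n $ k $ c)) \<longlonglongrightarrow> A$a$c - (\<Sum>k\<in>UNIV. B$a$k * K0 $ k $ c)"
        by (intro tendsto_diff tendsto_const tendsto_sum tendsto_mult ent)
      then show ?thesis by (simp add: matrix_matrix_mult_def)
    qed
    have "(\<lambda>n. b (K n)) \<longlonglongrightarrow> b K0"
    proof -
      have "(\<lambda>n. \<Sum>a\<in>UNIV. \<Sum>c\<in>UNIV. cmod (complex_of_real ((A - B ** K n) $ a $ c)))
         \<longlonglongrightarrow> (\<Sum>a\<in>UNIV. \<Sum>c\<in>UNIV. cmod (complex_of_real ((A - B ** K0) $ a $ c)))"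
        by (intro tendsto_sum tendsto_norm tendsto_of_real entl)
      then show ?thesis unfolding b_def cmat_def by simp
    qed
    then have "Bseq (\<lambda>n. b (K n))" by (rule convergent_imp_Bseq[OF convergentI])
    then obtain Bd where Bd: "\<And>n. norm (b (K n)) \<le> Bd" by (metis BseqE)
    have lb: "cmod (l n) \<le> Bd" for n
    proof -
      have "cmod (l n) \<le> b (K n)" using root_bound[OF l(1)[of n]] unfolding b_def .
      also have "\<dots> \<le> norm (b (K n))" by simp
      also have "\<dots> \<le> Bd" by (rule Bd)
      finally show ?thesis .
    qed
    let ?S = "cball (0::complex) Bd \<inter> {z. cmod z \<ge> 1}"
    have cl: "closed {z::complex. cmod z \<ge> 1}"
      using closed_Collect_le[OF continuous_on_const continuous_on_norm_id, of 1] by simp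
    have cS: "compact ?S"
      by (rule compact_Int_closed[OF compact_cball cl])
    have inS: "\<forall>n. l n \<in> ?S" using lb l(2) by auto
    obtain l0 r where l0: "l0 \<in> ?S" and r: "strict_mono r" and lr: "(l \<circ> r) \<longlonglongrightarrow> l0"
      by (rule seq_compactE[OF compact_imp_seq_compact[OF cS] inS])
    have Kr: "(K \<circ> r) \<longlonglongrightarrow> K0" using LIMSEQ_subseq_LIMSEQ[OF lim r] .
    have entr: "(\<lambda>n. (A - B ** K (r n)) $ a $ c) \<longlonglongrightarrow> (A - B ** K0) $ a $ c" for a c
      using LIMSEQ_subseq_LIMSEQ[OF entl r] by (simp add: o_def)
    have "(\<lambda>n. det (mat (l (r n)) - cmat (A - B ** K (r n)))) \<longlonglongrightarrow> det (mat l0 - cmat (A - B ** K0))"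
    proof (rule tendsto_det)
      fix a c
      show "(\<lambda>n. (mat (l (r n)) - cmat (A - B ** K (r n))) $ a $ c) \<longlonglongrightarrow> (mat l0 - cmat (A - B ** K0)) $ a $ c"
      proof -
        have l': "(\<lambda>n. l (r n)) \<longlonglongrightarrow> l0" using lr by (simp add: o_def)
        have "(\<lambda>n. (if a = c then l (r n) else 0) - complex_of_real ((A - B ** K (r n)) $ a $ c))
           \<longlonglongrightarrow> (if a = c then l0 else 0) - complex_of_real ((A - B ** K0) $ a $ c)"
          by (intro tendsto_diff tendsto_of_real entr) (use l' in auto)
        then show ?thesis unfolding cmat_def mat_def by simp
      qed
    qed
    moreover have "(\<lambda>n. det (mat (l (r n)) - cmat (A - B ** K (r n)))) = (\<lambda>n. 0)"
      using l(1) by auto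
    ultimately have "(\<lambda>n. 0::complex) \<longlonglongrightarrow> det (mat l0 - cmat (A - B ** K0))" by simp
    then have "det (mat l0 - cmat (A - B ** K0)) = 0"
      using LIMSEQ_unique[OF _ tendsto_const] by metis
    then show "K0 \<in> ?T" using l0 by auto
  qed
  then show ?thesis unfolding eq by (rule open_Compl)
qed

lemma mm_diff_left: "(A - B) ** C = A ** C - B ** (C::'a::comm_ring_1^'n^'m)"
  by (simp add: vec_eq_iff matrix_matrix_mult_def sum_subtractf left_diff_distrib)

lemma mm_diff_right: "A ** (B - C) = A ** B - A ** (C::'a::comm_ring_1^'n^'m)"
  by (simp add: vec_eq_iff matrix_matrix_mult_def sum_subtractf right_diff_distrib)

lemma mm_add_left: "(A + B) ** C = A ** C + B ** (C::'a::comm_ring_1^'n^'m)"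
  by (simp add: vec_eq_iff matrix_matrix_mult_def sum.distrib distrib_right)

lemma transpose_add': "transpose (A + B) = transpose A + transpose (B::'a::comm_ring_1^'n^'m)"
  by (simp add: vec_eq_iff transpose_def)

lemma transpose_diff': "transpose (A - B) = transpose A - transpose (B::'a::comm_ring_1^'n^'m)"
  by (simp add: vec_eq_iff transpose_def)

lemma inner_mv: "(v::real^'n) \<bullet> (M *v y) = (transpose M *v v) \<bullet> y"
proof -
  have "v \<bullet> (M *v y) = (v v* M) \<bullet> y" by (simp add: dot_lmul_matrix)
  then show ?thesis by simp
qed

lemma mpow_conj:
  assumes "D = M ** D ** transpose M"
  shows "D = mpow M k ** D ** transpose (mpow M k)"
proof (induction k)
  case 0
  then show ?case by simp
next
  case (Suc k)
  have "mpow M (Suc k) ** D ** transpose (mpow M (Suc k))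
      = M ** (mpow M k ** D ** transpose (mpow M k)) ** transpose M"
    by (simp add: matrix_transpose_mul matrix_mul_assoc)
  also have "\<dots> = M ** D ** transpose M" using Suc.IH by simp
  also have "\<dots> = D" using assms by simp
  finally show ?case by simp
qed

lemma conj_tendsto:
  fixes M D :: "real^'n^'n"
  assumes "spec_rad M < 1"
  shows "(\<lambda>k. (mpow M k ** D ** transpose (mpow M k)) $ i $ j) \<longlonglongrightarrow> 0"
proof -
  have "(\<lambda>k. \<Sum>l\<in>UNIV. (\<Sum>m\<in>UNIV. mpow M k $ i $ m * D $ m $ l) * mpow M k $ j $ l)
     \<longlonglongrightarrow> (\<Sum>l\<in>UNIV. (\<Sum>m\<in>UNIV. 0 * D $ m $ l) * 0)"
    by (intro tendsto_sum tendsto_mult tendsto_const mpow_real_tendsto_zero[OF assms])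
  then show ?thesis by (simp add: matrix_matrix_mult_def transpose_def)
qed

lemma lyap_unique:
  fixes M W X Y :: "real^'n^'n"
  assumes M: "spec_rad M < 1"
    and X: "X = W + M ** X ** transpose M" and Y: "Y = W + M ** Y ** transpose M"
  shows "X = Y"
proof -
  define D where "D = X - Y"
  have "M ** D ** transpose M = M ** X ** transpose M - M ** Y ** transpose M"
    unfolding D_def by (simp add: mm_diff_left mm_diff_right)
  also have "\<dots> = D"
  proof -
    have hx: "M ** X ** transpose M = X - W" using arg_cong[OF X, of "\<lambda>Z. Z - W"] by simp
    have hy: "M ** Y ** transpose M = Y - W" using arg_cong[OF Y, of "\<lambda>Z. Z - W"] by simp
    show ?thesis unfolding D_def hx hy by simp
  qed
  finally have D: "D = M ** D ** transpose M" by simp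
  have "D $ i $ j = 0" for i j
  proof -
    have "(\<lambda>k. (mpow M k ** D ** transpose (mpow M k)) $ i $ j) = (\<lambda>k. D $ i $ j)"
      using mpow_conj[OF D] by auto
    with conj_tendsto[OF M, of D i j] have "(\<lambda>k. D $ i $ j) \<longlonglongrightarrow> 0" by simp
    then show ?thesis by (simp add: LIMSEQ_const_iff)
  qed
  then have "D = 0" by (simp add: vec_eq_iff)
  then show ?thesis unfolding D_def by simp
qed

definition vecm :: "real^'n^'n \<Rightarrow> real^('n \<times> 'n)" where
  "vecm X = (\<chi> ij. X $ fst ij $ snd ij)"

definition unvecm :: "real^('n \<times> 'n) \<Rightarrow> real^'n^'n" where
  "unvecm v = (\<chi> i j. v $ (i, j))"

lemma unvecm_vecm[simp]: "unvecm (vecm X) = X"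
  by (simp add: vecm_def unvecm_def vec_eq_iff)

lemma vecm_unvecm[simp]: "vecm (unvecm v) = v"
  by (simp add: vecm_def unvecm_def vec_eq_iff)

lemma vecm_inj: "vecm X = vecm Y \<Longrightarrow> X = Y"
  by (metis unvecm_vecm)

lemma sum_pair_univ: "(\<Sum>kl\<in>UNIV. f kl) = (\<Sum>k\<in>UNIV. \<Sum>l\<in>UNIV. (f (k, l)::real))"
  by (simp add: sum.cartesian_product)

definition Lmat :: "real^'n^'n \<Rightarrow> real^('n \<times> 'n)^('n \<times> 'n)" where
  "Lmat M = (\<chi> ij kl. (if ij = kl then 1 else 0) - M $ fst ij $ fst kl * M $ snd ij $ snd kl)"

lemma Lmat_vec: "Lmat M *v vecm X = vecm (X - M ** X ** transpose M)"
proof -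
  have "(Lmat M *v vecm X) $ (i, j) = vecm (X - M ** X ** transpose M) $ (i, j)" for i j
  proof -
    have "(Lmat M *v vecm X) $ (i, j)
        = (\<Sum>kl\<in>UNIV. (if (i, j) = kl then 1 else 0) * X $ fst kl $ snd kl
             - M $ i $ fst kl * M $ j $ snd kl * X $ fst kl $ snd kl)"
      by (simp add: matrix_vector_mult_def Lmat_def vecm_def left_diff_distrib)
    also have "\<dots> = (\<Sum>kl\<in>UNIV. (if (i, j) = kl then 1 else 0) * X $ fst kl $ snd kl)
        - (\<Sum>kl\<in>UNIV. M $ i $ fst kl * M $ j $ snd kl * X $ fst kl $ snd kl)"
      by (rule sum_subtractf)
    also have "(\<Sum>kl\<in>UNIV. (if (i, j) = kl then 1 else 0) * X $ fst kl $ snd kl) = X $ i $ j"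
    proof -
      have "(\<Sum>kl\<in>UNIV. (if (i, j) = kl then 1 else 0) * X $ fst kl $ snd kl)
          = (\<Sum>kl\<in>UNIV. if (i, j) = kl then X $ fst kl $ snd kl else 0)"
        by (intro sum.cong) auto
      also have "\<dots> = X $ i $ j" by (simp add: sum.delta)
      finally show ?thesis .
    qed
    also have "(\<Sum>kl\<in>UNIV. M $ i $ fst kl * M $ j $ snd kl * X $ fst kl $ snd kl)
        = (\<Sum>k\<in>UNIV. \<Sum>l\<in>UNIV. M $ i $ k * M $ j $ l * X $ k $ l)"
      using sum_pair_univ[of "\<lambda>kl. M $ i $ fst kl * M $ j $ snd kl * X $ fst kl $ snd kl"] by simp
    also have "\<dots> = (\<Sum>l\<in>UNIV. (\<Sum>k\<in>UNIV. M $ i $ k * X $ k $ l) * M $ j $ l)"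
      apply (subst sum.swap)
      apply (simp add: sum_distrib_right)
      apply (intro sum.cong refl)
      apply (simp add: mult_ac)
      done
    also have "\<dots> = (M ** X ** transpose M) $ i $ j"
      by (simp add: matrix_matrix_mult_def transpose_def)
    finally show ?thesis by (simp add: vecm_def)
  qed
  then show ?thesis by (simp add: vec_eq_iff)
qed

lemma det_Lmat_nonzero:
  fixes M :: "real^'n^'n"
  assumes M: "spec_rad M < 1"
  shows "det (Lmat M) \<noteq> 0"
proof
  assume "det (Lmat M) = 0"
  then obtain v where v: "v \<noteq> 0" "Lmat M *v v = 0" using det_zero_kernel by blast
  define X where "X = unvecm v"
  have "vecm (X - M ** X ** transpose M) = 0" using v(2) Lmat_vec[of M X] by (simp add: X_def)
  moreover have v0: "vecm (0::real^'n^'n) = 0" by (simp add: vecm_def vec_eq_iff)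
  ultimately have "X - M ** X ** transpose M = 0" using vecm_inj by metis
  then have X: "X = 0 + M ** X ** transpose M" by simp
  have Z: "(0::real^'n^'n) = 0 + M ** 0 ** transpose M" by simp
  have "X = 0" by (rule lyap_unique[OF M X Z])
  then have "vecm X = 0" using v0 by simp
  then have "v = 0" unfolding X_def by simp
  then show False using v(1) by simp
qed

definition SigF :: "real^'n^'n \<Rightarrow> real^'n^'n \<Rightarrow> real^'n^'n" where
  "SigF M W = unvecm (\<chi> kl. det (\<chi> r c. if c = kl then vecm W $ r else Lmat M $ r $ c) / det (Lmat M))"

lemma SigF_solves:
  fixes M W :: "real^'n^'n"
  assumes d: "det (Lmat M) \<noteq> 0"
  shows "SigF M W = W + M ** SigF M W ** transpose M"
proof -
  have "invertible (Lmat M)" using d invertible_det_nz by blast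
  then obtain B where B: "Lmat M ** B = mat 1" unfolding invertible_def by blast
  define x where "x = B *v vecm W"
  have x: "Lmat M *v x = vecm W" unfolding x_def by (simp add: matrix_vector_mul_assoc B)
  have "x = (\<chi> kl. det (\<chi> r c. if c = kl then vecm W $ r else Lmat M $ r $ c) / det (Lmat M))"
    using cramer[OF d] x by blast
  then have sx: "vecm (SigF M W) = x" by (simp add: SigF_def)
  have "vecm (SigF M W - M ** SigF M W ** transpose M) = vecm W"
    using Lmat_vec[of M "SigF M W"] sx x by simp
  then have "SigF M W - M ** SigF M W ** transpose M = W" by (rule vecm_inj)
  then show ?thesis by (simp add: diff_eq_eq add.commute)
qed

lemma Sigma_K_eq:
  assumes M: "spec_rad (A - B ** K) < 1"
  shows "Sigma_K A B Sw Ss K = SigF (A - B ** K) (Sigma_wbar B Sw Ss)"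
  unfolding Sigma_K_def
proof (rule the_equality)
  show "SigF (A - B ** K) (Sigma_wbar B Sw Ss) =
        Sigma_wbar B Sw Ss + (A - B ** K) ** SigF (A - B ** K) (Sigma_wbar B Sw Ss) ** transpose (A - B ** K)"
    by (rule SigF_solves[OF det_Lmat_nonzero[OF M]])
  fix S assume S: "S = Sigma_wbar B Sw Ss + (A - B ** K) ** S ** transpose (A - B ** K)"
  show "S = SigF (A - B ** K) (Sigma_wbar B Sw Ss)"
    by (rule lyap_unique[OF M S SigF_solves[OF det_Lmat_nonzero[OF M]]])
qed

lemma Sigma_K_solves:
  assumes M: "spec_rad (A - B ** K) < 1"
  shows "Sigma_K A B Sw Ss K = Sigma_wbar B Sw Ss + (A - B ** K) ** Sigma_K A B Sw Ss K ** transpose (A - B ** K)"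
  unfolding Sigma_K_eq[OF M] by (rule SigF_solves[OF det_Lmat_nonzero[OF M]])

lemma quad_conj: "(v::real^'n) \<bullet> ((M ** X ** transpose M) *v v) = (transpose M *v v) \<bullet> (X *v (transpose M *v v))"
proof -
  have "(M ** X ** transpose M) *v v = M *v (X *v (transpose M *v v))"
    by (simp only: matrix_vector_mul_assoc matrix_mul_assoc)
  then show ?thesis by (simp only: inner_mv)
qed

lemma lyap_psd:
  fixes M W X :: "real^'n^'n"
  assumes M: "spec_rad M < 1" and W: "psd_mat W" and X: "X = W + M ** X ** transpose M"
  shows "psd_mat X"
proof -
  have Wt: "transpose W = W" and Wq: "\<And>v. v \<bullet> (W *v v) \<ge> 0" using W by (auto simp: psd_mat_def)
  have "transpose X = transpose W + transpose (M ** X ** transpose M)"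
    using X by (metis transpose_add')
  also have "transpose (M ** X ** transpose M) = M ** transpose X ** transpose M"
    by (simp add: matrix_transpose_mul matrix_mul_assoc)
  finally have Xt': "transpose X = W + M ** transpose X ** transpose M" using Wt by simp
  have sym: "transpose X = X" by (rule lyap_unique[OF M Xt' X])
  have step: "v \<bullet> (X *v v) \<ge> (transpose M *v v) \<bullet> (X *v (transpose M *v v))" for v
  proof -
    have "v \<bullet> (X *v v) = v \<bullet> (W *v v) + v \<bullet> ((M ** X ** transpose M) *v v)"
    proof -
      have "(W + M ** X ** transpose M) *v v = W *v v + (M ** X ** transpose M) *v v"
        by (simp add: matrix_vector_mult_def vec_eq_iff sum.distrib distrib_right)
      then have "X *v v = W *v v + (M ** X ** transpose M) *v v" using X by metis
      then show ?thesis by (simp add: inner_add_right)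
    qed
    also have "v \<bullet> ((M ** X ** transpose M) *v v) = (transpose M *v v) \<bullet> (X *v (transpose M *v v))"
      by (rule quad_conj)
    finally show ?thesis using Wq[of v] by simp
  qed
  have iter: "v \<bullet> (X *v v) \<ge> (transpose (mpow M k) *v v) \<bullet> (X *v (transpose (mpow M k) *v v))" for k v
  proof (induction k arbitrary: v)
    case 0
    then show ?case by simp
  next
    case (Suc k)
    have e: "transpose (mpow M (Suc k)) *v v = transpose (mpow M k) *v (transpose M *v v)"
      by (simp only: mpow.simps matrix_transpose_mul matrix_vector_mul_assoc)
    show ?case using step[of v] Suc.IH[of "transpose M *v v"] unfolding e by linarith
  qed
  have lim: "(\<lambda>k. (transpose (mpow M k) *v v) \<bullet> (X *v (transpose (mpow M k) *v v))) \<longlonglongrightarrow> 0" for v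
  proof -
    have "(\<lambda>k. \<Sum>a\<in>UNIV. (\<Sum>c\<in>UNIV. mpow M k $ c $ a * v $ c) * (\<Sum>b\<in>UNIV. X $ a $ b * (\<Sum>c\<in>UNIV. mpow M k $ c $ b * v $ c)))
        \<longlonglongrightarrow> (\<Sum>a\<in>UNIV. (\<Sum>c\<in>UNIV. 0 * v $ c) * (\<Sum>b\<in>UNIV. X $ a $ b * (\<Sum>c\<in>UNIV. 0 * v $ c)))"
      by (intro tendsto_sum tendsto_mult tendsto_const mpow_real_tendsto_zero[OF M])
    then show ?thesis
      by (simp add: inner_vec_def matrix_vector_mult_def transpose_def del: transpose_matrix_vector)
  qed
  have "v \<bullet> (X *v v) \<ge> 0" for v
    using LIMSEQ_le_const2[OF lim[of v]] iter[where v=v] by blast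
  then show ?thesis unfolding psd_mat_def using sym by blast
qed

lemma mv_axis: "((S::real^'n^'n) *v axis j 1) $ r = S $ r $ j"
proof -
  have "(S *v axis j 1) $ r = (\<Sum>c\<in>UNIV. S $ r $ c * axis j 1 $ c)"
    by (simp add: matrix_vector_mult_def)
  also have "\<dots> = (\<Sum>c\<in>UNIV. if c = j then S $ r $ j else 0)"
    by (intro sum.cong) (auto simp: axis_def)
  also have "\<dots> = S $ r $ j" by simp
  finally show ?thesis .
qed

lemma axis_inner: "axis i (1::real) \<bullet> (y::real^'n) = y $ i"
  by (simp add: inner_axis')

lemma quad_comb:
  fixes S :: "real^'n^'n"
  assumes sym: "transpose S = S"
  shows "(t *\<^sub>R a + b) \<bullet> (S *v (t *\<^sub>R a + b)) = t\<^sup>2 * (a \<bullet> (S *v a)) + 2 * t * (a \<bullet> (S *v b)) + b \<bullet> (S *v b)"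
proof -
  have ba: "b \<bullet> (S *v a) = a \<bullet> (S *v b)"
    using inner_mv[of b S a] sym by (simp add: inner_commute)
  have "(t *\<^sub>R a + b) \<bullet> (S *v (t *\<^sub>R a + b)) = (t *\<^sub>R a + b) \<bullet> (t *\<^sub>R (S *v a) + S *v b)"
    by (simp add: matrix_vector_right_distrib matrix_vector_mult_scaleR)
  also have "\<dots> = t * t * (a \<bullet> (S *v a)) + t * (a \<bullet> (S *v b)) + t * (b \<bullet> (S *v a)) + b \<bullet> (S *v b)"
    by (simp add: inner_add_left inner_add_right algebra_simps)
  finally show ?thesis using ba by (simp add: power2_eq_square algebra_simps)
qed

lemma psd_diag: "psd_mat S \<Longrightarrow> S $ i $ i \<ge> 0"
  unfolding psd_mat_def using axis_inner[of i "S *v axis i 1"] mv_axis[of S i i] by metis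

lemma psd_zero_diag_row:
  fixes S :: "real^'n^'n"
  assumes S: "psd_mat S" and d: "S $ i $ i = 0"
  shows "S $ i $ j = 0"
proof (rule ccontr)
  assume nz: "S $ i $ j \<noteq> 0"
  have sym: "transpose S = S" and q: "\<And>x. x \<bullet> (S *v x) \<ge> 0" using S by (auto simp: psd_mat_def)
  define t where "t = - (S $ j $ j + 1) / (2 * S $ i $ j)"
  have "(t *\<^sub>R axis i 1 + axis j 1) \<bullet> (S *v (t *\<^sub>R axis i 1 + axis j 1))
      = t\<^sup>2 * S $ i $ i + 2 * t * S $ i $ j + S $ j $ j"
    by (simp add: quad_comb[OF sym] axis_inner mv_axis)
  also have "\<dots> = -1" using nz d by (simp add: t_def field_simps)
  finally show False using q[of "t *\<^sub>R axis i 1 + axis j 1"] by simp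
qed

lemma mm_trans_entry: "((L::real^'n^'n) ** transpose L) $ r $ s = (\<Sum>c\<in>UNIV. L $ r $ c * L $ s $ c)"
  by (simp add: matrix_matrix_mult_def transpose_def)

lemma quad_expand: "(x::real^'n) \<bullet> (S *v x) = (\<Sum>r\<in>UNIV. x $ r * (\<Sum>c\<in>UNIV. S $ r $ c * x $ c))"
  by (simp add: inner_vec_def matrix_vector_mult_def)

lemma gram_aux:
  fixes I :: "'n::finite set"
  assumes "finite I"
  shows "\<forall>S::real^'n^'n. psd_mat S \<longrightarrow> (\<forall>i. i \<notin> I \<longrightarrow> S $ i $ i = 0) \<longrightarrow>
           (\<exists>L. L ** transpose L = S \<and> (\<forall>r c. c \<notin> I \<longrightarrow> L $ r $ c = 0))"
  using assms
proof (induction I rule: finite_induct)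
  case empty
  show ?case
  proof (intro allI impI)
    fix S :: "real^'n^'n" assume S: "psd_mat S" and z: "\<forall>i. i \<notin> {} \<longrightarrow> S $ i $ i = 0"
    have "S = 0" using psd_zero_diag_row[OF S] z by (simp add: vec_eq_iff)
    then show "\<exists>L. L ** transpose L = S \<and> (\<forall>r c. c \<notin> {} \<longrightarrow> L $ r $ c = 0)"
      by (intro exI[of _ 0]) simp
  qed
next
  case (insert i0 I)
  show ?case
  proof (intro allI impI)
    fix S :: "real^'n^'n" assume S: "psd_mat S" and z: "\<forall>i. i \<notin> insert i0 I \<longrightarrow> S $ i $ i = 0"
    have sym: "transpose S = S" and q: "\<And>x. x \<bullet> (S *v x) \<ge> 0" using S by (auto simp: psd_mat_def)
    have symE: "S $ a $ b = S $ b $ a" for a b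
      using sym by (metis transpose_def vec_lambda_beta)
    show "\<exists>L. L ** transpose L = S \<and> (\<forall>r c. c \<notin> insert i0 I \<longrightarrow> L $ r $ c = 0)"
    proof (cases "S $ i0 $ i0 = 0")
      case True
      then have "\<forall>i. i \<notin> I \<longrightarrow> S $ i $ i = 0" using z by auto
      then obtain L where "L ** transpose L = S" "\<forall>r c. c \<notin> I \<longrightarrow> L $ r $ c = 0"
        using insert.IH S by blast
      then show ?thesis by auto
    next
      case False
      define d where "d = S $ i0 $ i0"
      have d0: "d > 0" using False psd_diag[OF S, of i0] by (simp add: d_def)
      define S' where "S' = (\<chi> r c. S $ r $ c - S $ r $ i0 * S $ c $ i0 / d)"
      have S'sym: "transpose S' = S'"
        by (simp add: S'_def transpose_def vec_eq_iff symE mult.commute)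
      have S'q: "x \<bullet> (S' *v x) \<ge> 0" for x
      proof -
        define y where "y = (S *v x) $ i0"
        define t where "t = - y / d"
        have y: "y = (\<Sum>c\<in>UNIV. S $ c $ i0 * x $ c)"
          by (simp add: y_def matrix_vector_mult_def symE)
        have "x \<bullet> (S' *v x) = (\<Sum>r\<in>UNIV. x $ r * (\<Sum>c\<in>UNIV. S $ r $ c * x $ c))
            - (\<Sum>r\<in>UNIV. \<Sum>c\<in>UNIV. (x $ r * S $ r $ i0) * (S $ c $ i0 * x $ c)) / d"
          by (simp add: quad_expand S'_def left_diff_distrib right_diff_distrib sum_subtractf
              sum_distrib_left sum_divide_distrib mult_ac)
        also have "(\<Sum>r\<in>UNIV. \<Sum>c\<in>UNIV. (x $ r * S $ r $ i0) * (S $ c $ i0 * x $ c)) = y * y"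
          unfolding y by (simp add: sum_product mult.commute)
        finally have e1: "x \<bullet> (S' *v x) = x \<bullet> (S *v x) - y * y / d"
          by (simp add: quad_expand)
        have "(t *\<^sub>R axis i0 1 + x) \<bullet> (S *v (t *\<^sub>R axis i0 1 + x)) = t\<^sup>2 * d + 2 * t * y + x \<bullet> (S *v x)"
          by (simp add: quad_comb[OF sym] axis_inner mv_axis d_def y_def)
        also have "\<dots> = x \<bullet> (S *v x) - y * y / d"
          using d0 by (simp add: t_def field_simps power2_eq_square)
        finally show ?thesis using e1 q[of "t *\<^sub>R axis i0 1 + x"] by simp
      qed
      have S'psd: "psd_mat S'" unfolding psd_mat_def using S'sym S'q by blast
      have S'z: "\<forall>i. i \<notin> I \<longrightarrow> S' $ i $ i = 0"
      proof (intro allI impI)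
        fix i assume i: "i \<notin> I"
        show "S' $ i $ i = 0"
        proof (cases "i = i0")
          case True
          then show ?thesis using d0 by (simp add: S'_def d_def)
        next
          case False
          then have "S $ i $ i = 0" using z i by auto
          then have "S $ i $ i0 = 0" by (rule psd_zero_diag_row[OF S])
          then show ?thesis using \<open>S $ i $ i = 0\<close> by (simp add: S'_def)
        qed
      qed
      obtain L' where L': "L' ** transpose L' = S'" and L'z: "\<forall>r c. c \<notin> I \<longrightarrow> L' $ r $ c = 0"
        using insert.IH S'psd S'z by blast
      define u where "u = (\<chi> r. S $ r $ i0 / sqrt d)"
      define L where "L = (\<chi> r c. if c = i0 then u $ r else L' $ r $ c)"
      have "(L ** transpose L) $ r $ s = S $ r $ s" for r s
      proof -
        have pt: "L $ r $ c * L $ s $ c = (if c = i0 then u $ r * u $ s else 0) + L' $ r $ c * L' $ s $ c" for c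
          using L'z insert.hyps(2) by (auto simp: L_def)
        have "(L ** transpose L) $ r $ s = (\<Sum>c\<in>UNIV. (if c = i0 then u $ r * u $ s else 0) + L' $ r $ c * L' $ s $ c)"
          by (simp add: mm_trans_entry pt)
        also have "\<dots> = u $ r * u $ s + (L' ** transpose L') $ r $ s"
          by (simp add: sum.distrib mm_trans_entry)
        also have "\<dots> = S $ r $ i0 * S $ s $ i0 / d + S' $ r $ s"
          using d0 by (simp add: u_def L' real_sqrt_mult[symmetric])
        also have "\<dots> = S $ r $ s" by (simp add: S'_def)
        finally show ?thesis .
      qed
      then have "L ** transpose L = S" by (simp add: vec_eq_iff)
      moreover have "\<forall>r c. c \<notin> insert i0 I \<longrightarrow> L $ r $ c = 0"
        using L'z by (simp add: L_def)
      ultimately show ?thesis by blast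
    qed
  qed
qed

lemma gram:
  fixes S :: "real^'n^'n"
  assumes "psd_mat S"
  shows "\<exists>L::real^'n^'n. L ** transpose L = S"
proof -
  have "\<forall>S::real^'n^'n. psd_mat S \<longrightarrow> (\<forall>i. i \<notin> (UNIV::'n set) \<longrightarrow> S $ i $ i = 0) \<longrightarrow>
           (\<exists>L. L ** transpose L = S \<and> (\<forall>r c. c \<notin> (UNIV::'n set) \<longrightarrow> L $ r $ c = 0))"
    by (rule gram_aux) simp
  then have "(\<exists>L. L ** transpose L = S \<and> (\<forall>r c. c \<notin> (UNIV::'n set) \<longrightarrow> L $ r $ c = 0))"
    using assms by simp
  then show ?thesis by blast
qed

lemma std_normal_eq: "std_normal_density z = (1 / sqrt (2 * pi)) * exp (- (z\<^sup>2) / 2)"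
  by (simp add: std_normal_density_def)

lemma Qfun_has_integral: "(std_normal_density has_integral Qfun a) {a..}"
proof -
  define f where "f = (\<lambda>t. indicator {a..} t *\<^sub>R std_normal_density t)"
  have int: "integrable lborel f"
    unfolding f_def by (rule integrable_mult_indicator) auto
  have "(f has_integral (integral\<^sup>L lborel f)) UNIV" by (rule has_integral_integral_lborel[OF int])
  moreover have "f = (\<lambda>t. if t \<in> {a..} then std_normal_density t else 0)"
    by (auto simp: f_def fun_eq_iff indicator_def)
  ultimately have I: "(std_normal_density has_integral (integral\<^sup>L lborel f)) {a..}"
    using has_integral_restrict_UNIV by metis
  then have "((\<lambda>z. sqrt (2 * pi) * std_normal_density z) has_integral sqrt (2 * pi) * integral\<^sup>L lborel f) {a..}"
    by (rule has_integral_mult_right)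
  moreover have "(\<lambda>z. sqrt (2 * pi) * std_normal_density z) = (\<lambda>z. exp (- (z\<^sup>2) / 2))"
    by (simp add: fun_eq_iff std_normal_eq)
  ultimately have "((\<lambda>z. exp (- (z\<^sup>2) / 2)) has_integral sqrt (2 * pi) * integral\<^sup>L lborel f) {a..}"
    by simp
  then have "integral {a..} (\<lambda>z. exp (- (z\<^sup>2) / 2)) = sqrt (2 * pi) * integral\<^sup>L lborel f"
    by (rule integral_unique)
  then have "Qfun a = integral\<^sup>L lborel f" by (simp add: Qfun_def)
  with I show ?thesis by simp
qed

lemma Qfun_L: "Qfun a = (\<integral>t. indicator {a..} t * std_normal_density t \<partial>lborel)"
proof -
  define f where "f = (\<lambda>t. indicator {a..} t *\<^sub>R std_normal_density t)"
  have int: "integrable lborel f"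
    unfolding f_def by (rule integrable_mult_indicator) auto
  have "(f has_integral (integral\<^sup>L lborel f)) UNIV" by (rule has_integral_integral_lborel[OF int])
  moreover have "f = (\<lambda>t. if t \<in> {a..} then std_normal_density t else 0)"
    by (auto simp: f_def fun_eq_iff indicator_def)
  ultimately have "(std_normal_density has_integral (integral\<^sup>L lborel f)) {a..}"
    using has_integral_restrict_UNIV by metis
  then have "Qfun a = integral\<^sup>L lborel f"
    using Qfun_has_integral[of a] has_integral_unique by blast
  then show ?thesis by (simp add: f_def)
qed

lemma Qfun_N: "ennreal (Qfun a) = (\<integral>\<^sup>+t. ennreal (indicator {a..} t * std_normal_density t) \<partial>lborel)"
proof -
  have int: "integrable lborel (\<lambda>t. indicator {a..} t * std_normal_density t)"
    using integrable_mult_indicator[of "{a..}" lborel std_normal_density] by simp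
  show ?thesis unfolding Qfun_L
    by (rule nn_integral_eq_integral[symmetric]) (use int in auto)
qed

lemma Qfun_nonneg: "Qfun a \<ge> 0"
  unfolding Qfun_L by (rule integral_nonneg_AE) auto

lemma Qfun_deriv: "(Qfun has_real_derivative - std_normal_density x) (at x)"
proof -
  have cont: "continuous_on UNIV std_normal_density"
    unfolding std_normal_density_def[abs_def] by (intro continuous_intros) auto
  have eq: "Qfun a = Qfun (x - 1) - integral {x - 1..a} std_normal_density" if "a \<in> {x - 1<..<x + 1}" for a
  proof -
    have i1: "(std_normal_density has_integral integral {x - 1..a} std_normal_density) {x - 1..a}"
      by (intro integrable_integral integrable_continuous_interval continuous_on_subset[OF cont]) auto
    have neg: "negligible ({x - 1..a} \<inter> {a..})"
    proof -
      have "{x - 1..a} \<inter> {a..} = {a}" using that by auto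
      then show ?thesis by simp
    qed
    from has_integral_Un[OF i1 Qfun_has_integral neg]
    have "(std_normal_density has_integral (integral {x - 1..a} std_normal_density + Qfun a)) ({x - 1..a} \<union> {a..})" .
    moreover have "{x - 1..a} \<union> {a..} = {x - 1..}" using that by auto
    ultimately have "(std_normal_density has_integral (integral {x - 1..a} std_normal_density + Qfun a)) {x - 1..}"
      by simp
    then have "integral {x - 1..a} std_normal_density + Qfun a = Qfun (x - 1)"
      using Qfun_has_integral[of "x - 1"] has_integral_unique by blast
    then show ?thesis by simp
  qed
  have "((\<lambda>a. integral {x - 1..a} std_normal_density) has_real_derivative std_normal_density x) (at x within {x - 1..x + 1})"
    by (rule integral_has_real_derivative) (auto intro: continuous_on_subset[OF cont])
  moreover have "at x within {x - 1..x + 1} = at x"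
    by (rule at_within_interior) auto
  ultimately have d: "((\<lambda>a. integral {x - 1..a} std_normal_density) has_real_derivative std_normal_density x) (at x)"
    by simp
  have "((\<lambda>a. Qfun (x - 1) - integral {x - 1..a} std_normal_density) has_real_derivative - std_normal_density x) (at x)"
    using d by (auto intro!: derivative_eq_intros)
  then show ?thesis
    by (rule has_field_derivative_transform_within_open[where S = "{x - 1<..<x + 1}"]) (use eq in auto)
qed

lemma std_normal_fun: "std_normal_density = (\<lambda>z. (1 / sqrt (2 * pi)) * exp (- (z\<^sup>2) / 2))"
  by (rule ext) (rule std_normal_eq)

lemma std_normal_deriv: "(std_normal_density has_real_derivative - x * std_normal_density x) (at x)"
proof -
  have g: "((\<lambda>x. c * exp (- (x\<^sup>2) / 2)) has_real_derivative
        c * (exp (- (x\<^sup>2) / 2) * (- x))) (at x)" for c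
    by (auto intro!: derivative_eq_intros simp: power2_eq_square)
  have "((\<lambda>x. (1 / sqrt (2 * pi)) * exp (- (x\<^sup>2) / 2)) has_real_derivative
        (1 / sqrt (2 * pi)) * (exp (- (x\<^sup>2) / 2) * (- x))) (at x)"
    by (rule g)
  then show ?thesis
    by (simp only: std_normal_fun) (simp add: algebra_simps)
qed

lemma Qfun_C2: "C2 UNIV Qfun"
proof (rule C2_real[where \<phi>' = "\<lambda>x. - std_normal_density x" and \<phi>'' = "\<lambda>x. x * std_normal_density x"])
  show "\<forall>x\<in>UNIV. (Qfun has_real_derivative - std_normal_density x) (at x)"
    using Qfun_deriv by blast
  show "\<forall>x\<in>UNIV. ((\<lambda>x. - std_normal_density x) has_real_derivative x * std_normal_density x) (at x)"
    using std_normal_deriv by (auto intro!: derivative_eq_intros)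
  show "continuous_on UNIV (\<lambda>x. x * std_normal_density x)"
    unfolding std_normal_density_def[abs_def] by (intro continuous_intros) auto
qed

lemma Qfun_cont: "continuous_on UNIV Qfun"
  using C1_cont[OF C2_imp_C1[OF Qfun_C2]] .

lemma Qfun_measurable[measurable]: "Qfun \<in> borel_measurable borel"
  by (rule borel_measurable_continuous_onI[OF Qfun_cont])

lemma nd_scale: "\<sigma> > 0 \<Longrightarrow> normal_density m \<sigma> (m + \<sigma> * t) = std_normal_density t / \<sigma>"
  by (simp add: normal_density_def power_mult_distrib real_sqrt_mult field_simps)

lemma QN_shift:
  assumes \<sigma>: "\<sigma> > 0"
  shows "(\<integral>\<^sup>+x. ennreal (indicator {b..} x * normal_density m \<sigma> x) \<partial>lborel) = ennreal (Qfun ((b - m) / \<sigma>))"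
proof -
  have "(\<integral>\<^sup>+x. ennreal (indicator {b..} x * normal_density m \<sigma> x) \<partial>lborel)
      = ennreal \<bar>\<sigma>\<bar> * (\<integral>\<^sup>+t. ennreal (indicator {b..} (m + \<sigma> * t) * normal_density m \<sigma> (m + \<sigma> * t)) \<partial>lborel)"
    by (rule nn_integral_real_affine) (use \<sigma> in auto)
  also have "(\<lambda>t. ennreal (indicator {b..} (m + \<sigma> * t) * normal_density m \<sigma> (m + \<sigma> * t)))
      = (\<lambda>t. ennreal (1 / \<sigma>) * ennreal (indicator {(b - m) / \<sigma>..} t * std_normal_density t))"
  proof
    fix t
    have "indicator {b..} (m + \<sigma> * t) = (indicator {(b - m) / \<sigma>..} t :: real)"
      using \<sigma> by (auto simp: indicator_def field_simps)
    then show "ennreal (indicator {b..} (m + \<sigma> * t) * normal_density m \<sigma> (m + \<sigma> * t))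
      = ennreal (1 / \<sigma>) * ennreal (indicator {(b - m) / \<sigma>..} t * std_normal_density t)"
      using \<sigma> by (simp add: nd_scale ennreal_mult[symmetric] field_simps)
  qed
  also have "(\<integral>\<^sup>+t. ennreal (1 / \<sigma>) * ennreal (indicator {(b - m) / \<sigma>..} t * std_normal_density t) \<partial>lborel)
      = ennreal (1 / \<sigma>) * ennreal (Qfun ((b - m) / \<sigma>))"
    by (subst nn_integral_cmult) (auto simp: Qfun_N)
  also have "ennreal \<bar>\<sigma>\<bar> * (ennreal (1 / \<sigma>) * ennreal (Qfun ((b - m) / \<sigma>))) = ennreal (Qfun ((b - m) / \<sigma>))"
    using \<sigma> by (simp add: ennreal_mult[symmetric] mult.assoc[symmetric])
  finally show ?thesis .
qed

lemma conv_Qfun: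
  assumes s: "s > 0" and \<tau>: "\<tau> > 0"
  shows "(\<integral>y. normal_density 0 \<tau> y * Qfun ((\<epsilon> - y) / s) \<partial>lborel) = Qfun (\<epsilon> / sqrt (s\<^sup>2 + \<tau>\<^sup>2))"
proof -
  define \<rho> where "\<rho> = sqrt (s\<^sup>2 + \<tau>\<^sup>2)"
  have \<rho>: "\<rho> > 0" using s \<tau> by (simp add: \<rho>_def add_pos_pos)
  have A: "ennreal (Qfun ((\<epsilon> - y) / s)) = (\<integral>\<^sup>+x. ennreal (indicator {\<epsilon>..} x * normal_density 0 s (x - y)) \<partial>lborel)" for y
  proof -
    have e: "normal_density 0 s (x - y) = normal_density y s x" for x
      by (simp add: normal_density_def power2_commute)
    show ?thesis using QN_shift[OF s, of \<epsilon> y] by (simp add: e)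
  qed
  have "(\<integral>\<^sup>+y. ennreal (normal_density 0 \<tau> y * Qfun ((\<epsilon> - y) / s)) \<partial>lborel)
      = (\<integral>\<^sup>+y. ennreal (normal_density 0 \<tau> y) * (\<integral>\<^sup>+x. ennreal (indicator {\<epsilon>..} x * normal_density 0 s (x - y)) \<partial>lborel) \<partial>lborel)"
    by (intro nn_integral_cong) (simp only: ennreal_mult[OF normal_density_nonneg Qfun_nonneg] A)
  also have "\<dots> = (\<integral>\<^sup>+y. (\<integral>\<^sup>+x. ennreal (indicator {\<epsilon>..} x * normal_density 0 s (x - y) * normal_density 0 \<tau> y) \<partial>lborel) \<partial>lborel)"
    by (intro nn_integral_cong)
       (simp add: nn_integral_cmult[symmetric] ennreal_mult[symmetric] mult_ac)
  also have "\<dots> = (\<integral>\<^sup>+x. (\<integral>\<^sup>+y. ennreal (indicator {\<epsilon>..} x * normal_density 0 s (x - y) * normal_density 0 \<tau> y) \<partial>lborel) \<partial>lborel)"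
    by (rule lborel_pair.Fubini') measurable
  also have "\<dots> = (\<integral>\<^sup>+x. ennreal (indicator {\<epsilon>..} x) * (\<integral>\<^sup>+y. ennreal (normal_density 0 s (x - y) * normal_density 0 \<tau> y) \<partial>lborel) \<partial>lborel)"
    by (intro nn_integral_cong)
       (simp add: nn_integral_cmult[symmetric] ennreal_mult[symmetric] mult_ac)
  also have "\<dots> = (\<integral>\<^sup>+x. ennreal (indicator {\<epsilon>..} x) * ennreal (normal_density 0 \<rho> x) \<partial>lborel)"
  proof -
    have "(\<integral>\<^sup>+y. ennreal (normal_density 0 s (x - y) * normal_density 0 \<tau> y) \<partial>lborel) = ennreal (normal_density 0 \<rho> x)" for x
      using fun_cong[OF conv_normal_density_zero_mean[OF s \<tau>], of x] unfolding \<rho>_def by simp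
    then show ?thesis by simp
  qed
  also have "\<dots> = (\<integral>\<^sup>+x. ennreal (indicator {\<epsilon>..} x * normal_density 0 \<rho> x) \<partial>lborel)"
    by (intro nn_integral_cong) (simp add: ennreal_mult)
  also have "\<dots> = ennreal (Qfun (\<epsilon> / \<rho>))"
    using QN_shift[OF \<rho>, of \<epsilon> 0] by simp
  finally have N: "(\<integral>\<^sup>+y. ennreal (normal_density 0 \<tau> y * Qfun ((\<epsilon> - y) / s)) \<partial>lborel) = ennreal (Qfun (\<epsilon> / \<rho>))" .
  have "(\<integral>y. normal_density 0 \<tau> y * Qfun ((\<epsilon> - y) / s) \<partial>lborel)
      = enn2real (\<integral>\<^sup>+y. ennreal (normal_density 0 \<tau> y * Qfun ((\<epsilon> - y) / s)) \<partial>lborel)"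
    by (rule integral_eq_nn_integral) (auto simp: Qfun_nonneg)
  also have "\<dots> = Qfun (\<epsilon> / \<rho>)" using N Qfun_nonneg by simp
  finally show ?thesis unfolding \<rho>_def .
qed

abbreviation "NN \<equiv> density lborel std_normal_density"

lemma prob_NN: "prob_space NN"
  by (rule prob_space_normal_density) simp

lemma sets_NN: "sets NN = sets borel" by simp

lemma prob_P: "prob_space (PiM (UNIV::'n set) (\<lambda>_. NN))"
  by (rule prob_space_PiM) (rule prob_NN)

lemma coord_distr:
  "distr (PiM (UNIV::'n set) (\<lambda>_. NN)) lborel (\<lambda>z. z i) = NN"
proof -
  have "distr (PiM (UNIV::'n set) (\<lambda>_. NN)) lborel (\<lambda>z. z i) = distr (PiM (UNIV::'n set) (\<lambda>_. NN)) NN (\<lambda>z. z i)"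
    by (rule distr_cong) auto
  also have "\<dots> = NN"
    by (rule distr_PiM_component) (auto intro: prob_NN)
  finally show ?thesis .
qed

lemma coord_distributed:
  "distributed (PiM (UNIV::'n set) (\<lambda>_. NN)) lborel (\<lambda>z. z i) std_normal_density"
  unfolding distributed_def
  using coord_distr[of i] by (auto simp: measurable_component_singleton)

lemma coord_indep:
  "prob_space.indep_vars (PiM (UNIV::'n set) (\<lambda>_. NN)) (\<lambda>_. borel) (\<lambda>i z. z i) UNIV"
proof -
  interpret P: prob_space "PiM (UNIV::'n set) (\<lambda>_. NN)" by (rule prob_P)
  have rv: "(\<lambda>z. z i) \<in> measurable (PiM (UNIV::'n set) (\<lambda>_. NN)) borel" for i :: 'n
  proof -
    have A: "(\<lambda>z. z i) \<in> measurable (PiM (UNIV::'n set) (\<lambda>_. NN)) NN"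
      by (rule measurable_component_singleton) simp
    have B: "measurable (PiM (UNIV::'n set) (\<lambda>_. NN)) NN = measurable (PiM (UNIV::'n set) (\<lambda>_. NN)) borel"
      by (rule measurable_cong_sets) auto
    from A show ?thesis unfolding B .
  qed
  have "distr (PiM (UNIV::'n set) (\<lambda>_. NN)) (PiM UNIV (\<lambda>_. borel)) (\<lambda>x. \<lambda>i\<in>UNIV. x i)
      = distr (PiM (UNIV::'n set) (\<lambda>_. NN)) (PiM UNIV (\<lambda>_. borel)) (\<lambda>x. x)"
    by (rule distr_cong) (auto simp: restrict_def)
  also have "\<dots> = PiM (UNIV::'n set) (\<lambda>_. NN)"
    by (rule distr_id2, rule sets_PiM_cong) auto
  also have "\<dots> = PiM UNIV (\<lambda>i. distr (PiM (UNIV::'n set) (\<lambda>_. NN)) borel (\<lambda>z. z i))"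
  proof -
    have "distr (PiM (UNIV::'n set) (\<lambda>_. NN)) borel (\<lambda>z. z i) = NN" for i
    proof -
      have "distr (PiM (UNIV::'n set) (\<lambda>_. NN)) borel (\<lambda>z. z i) = distr (PiM (UNIV::'n set) (\<lambda>_. NN)) lborel (\<lambda>z. z i)"
        by (rule distr_cong) auto
      then show ?thesis using coord_distr by simp
    qed
    then show ?thesis by simp
  qed
  finally show ?thesis
    by (subst P.indep_vars_iff_distr_eq_PiM) (auto intro: rv)
qed

lemma gauss_lin:
  fixes c :: "real^'n"
  assumes s: "s > 0"
  shows "(\<integral>z. Qfun ((\<epsilon> - c \<bullet> (\<chi> i. z i)) / s) \<partial>PiM (UNIV::'n set) (\<lambda>_. NN))
       = Qfun (\<epsilon> / sqrt (s\<^sup>2 + c \<bullet> c))"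
proof -
  interpret P: prob_space "PiM (UNIV::'n set) (\<lambda>_. NN)" by (rule prob_P)
  have inner_eq: "c \<bullet> (\<chi> i. z i) = (\<Sum>i\<in>UNIV. c $ i * z i)" for z :: "'n \<Rightarrow> real"
    by (simp add: inner_vec_def)
  show ?thesis
  proof (cases "c = 0")
    case True
    then show ?thesis using s by (simp add: P.prob_space)
  next
    case False
    define I where "I = {i. c $ i \<noteq> 0}"
    have I: "finite I" "I \<noteq> {}" using False by (auto simp: I_def vec_eq_iff)
    define X where "X = (\<lambda>i (z::'n \<Rightarrow> real). c $ i * z i)"
    have indX: "P.indep_vars (\<lambda>_. borel) X I"
    proof -
      have "P.indep_vars (\<lambda>_. borel) (\<lambda>i z. (\<lambda>x. c $ i * x) (z i)) UNIV"
        by (rule P.indep_vars_compose2[OF coord_indep]) auto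
      then show ?thesis unfolding X_def by (rule P.indep_vars_subset) auto
    qed
    have distX: "distributed (PiM (UNIV::'n set) (\<lambda>_. NN)) lborel (X i) (normal_density 0 \<bar>c $ i\<bar>)"
      if "i \<in> I" for i
    proof -
      have "c $ i \<noteq> 0" using that by (simp add: I_def)
      from P.normal_density_affine[OF coord_distributed[of i] _ this, of 0]
      show ?thesis by (simp add: X_def)
    qed
    have sumX: "distributed (PiM (UNIV::'n set) (\<lambda>_. NN)) lborel (\<lambda>z. \<Sum>i\<in>I. X i z)
        (normal_density (\<Sum>i\<in>I. 0) (sqrt (\<Sum>i\<in>I. \<bar>c $ i\<bar>\<^sup>2)))"
      by (rule P.sum_indep_normal[OF I indX]) (auto simp: I_def intro: distX)
    have sumI: "(\<Sum>i\<in>I. X i z) = c \<bullet> (\<chi> i. z i)" for z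
    proof -
      have "(\<Sum>i\<in>I. X i z) = (\<Sum>i\<in>UNIV. c $ i * z i)"
        unfolding X_def by (rule sum.mono_neutral_left) (auto simp: I_def)
      then show ?thesis by (simp add: inner_eq)
    qed
    have cc: "(\<Sum>i\<in>I. \<bar>c $ i\<bar>\<^sup>2) = c \<bullet> c"
    proof -
      have "(\<Sum>i\<in>I. \<bar>c $ i\<bar>\<^sup>2) = (\<Sum>i\<in>I. c $ i * c $ i)"
        by (simp add: power2_eq_square)
      also have "\<dots> = (\<Sum>i\<in>UNIV. c $ i * c $ i)"
        by (rule sum.mono_neutral_left) (auto simp: I_def)
      finally show ?thesis by (simp add: inner_vec_def)
    qed
    define \<tau> where "\<tau> = sqrt (c \<bullet> c)"
    have \<tau>: "\<tau> > 0" using False by (simp add: \<tau>_def)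
    have dY: "distributed (PiM (UNIV::'n set) (\<lambda>_. NN)) lborel (\<lambda>z. c \<bullet> (\<chi> i. z i)) (normal_density 0 \<tau>)"
      using sumX unfolding sumI cc \<tau>_def by simp
    have "(\<integral>z. Qfun ((\<epsilon> - c \<bullet> (\<chi> i. z i)) / s) \<partial>PiM (UNIV::'n set) (\<lambda>_. NN))
        = (\<integral>y. normal_density 0 \<tau> y * Qfun ((\<epsilon> - y) / s) \<partial>lborel)"
      by (rule distributed_integral[OF dY, symmetric]) auto
    also have "\<dots> = Qfun (\<epsilon> / sqrt (s\<^sup>2 + \<tau>\<^sup>2))" by (rule conv_Qfun[OF s \<tau>])
    also have "\<tau>\<^sup>2 = c \<bullet> c" by (simp add: \<tau>_def)
    finally show ?thesis .
  qed
qed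

definition C2M :: "'a::real_normed_vector set \<Rightarrow> ('a \<Rightarrow> real^'m^'k) \<Rightarrow> bool" where
  "C2M U F \<longleftrightarrow> (\<forall>i j. C2 U (\<lambda>x. F x $ i $ j))"

lemma C2M_const: "C2M U (\<lambda>x. C)"
  unfolding C2M_def by (auto intro: C2_const)

lemma C2M_add: "C2M U F \<Longrightarrow> C2M U G \<Longrightarrow> C2M U (\<lambda>x. F x + G x)"
  unfolding C2M_def by (auto intro: C2_add)

lemma C2M_diff: "C2M U F \<Longrightarrow> C2M U G \<Longrightarrow> C2M U (\<lambda>x. F x - G x)"
  unfolding C2M_def by (auto intro: C2_diff)

lemma C2M_mult:
  assumes "C2M U F" "C2M U G"
  shows "C2M U (\<lambda>x. F x ** G x)"
  unfolding C2M_def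
proof (intro allI)
  fix i j
  have "C2 U (\<lambda>x. \<Sum>k\<in>UNIV. F x $ i $ k * G x $ k $ j)"
    using assms unfolding C2M_def by (intro C2_sum C2_mult) auto
  then show "C2 U (\<lambda>x. (F x ** G x) $ i $ j)" by (simp add: matrix_matrix_mult_def)
qed

lemma C2M_transpose: "C2M U F \<Longrightarrow> C2M U (\<lambda>x. transpose (F x))"
  unfolding C2M_def by (simp add: transpose_def)

lemma C2M_id: "C2M U (\<lambda>K::real^'m^'k. K)"
  unfolding C2M_def
proof (intro allI)
  fix i j
  have "bounded_linear (\<lambda>K::real^'m^'k. K $ i $ j)"
    using bounded_linear_compose[OF bounded_linear_vec_nth bounded_linear_vec_nth] .
  then show "C2 U (\<lambda>K::real^'m^'k. K $ i $ j)" by (rule C2_linear)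
qed

lemma C2_det:
  fixes F :: "'a::real_normed_vector \<Rightarrow> real^'n^'n"
  assumes "C2M U F"
  shows "C2 U (\<lambda>x. det (F x))"
proof -
  have "C2 U (\<lambda>x. \<Sum>p\<in>{p. p permutes (UNIV::'n set)}. of_int (sign p) * (\<Prod>i\<in>UNIV. F x $ i $ p i))"
    using assms unfolding C2M_def by (intro C2_sum C2_mult C2_const C2_prod) auto
  then show ?thesis by (simp add: det_def)
qed

lemma C2_trace: "C2M U F \<Longrightarrow> C2 U (\<lambda>x. trace (F x))"
  unfolding C2M_def trace_def by (intro C2_sum) auto

lemma C2_quad:
  assumes "C2M U F"
  shows "C2 U (\<lambda>x. (q::real^'n) \<bullet> (F x *v q))"
proof -
  have "C2 U (\<lambda>x. \<Sum>i\<in>UNIV. q $ i * (\<Sum>j\<in>UNIV. F x $ i $ j * q $ j))"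
    using assms unfolding C2M_def by (intro C2_sum C2_mult C2_const) auto
  then show ?thesis by (simp add: inner_vec_def matrix_vector_mult_def)
qed

lemma C2M_Lmat:
  fixes F :: "'a::real_normed_vector \<Rightarrow> real^'n^'n"
  assumes "C2M U F"
  shows "C2M U (\<lambda>x. Lmat (F x))"
  unfolding C2M_def
proof (intro allI)
  fix ij kl :: "'n \<times> 'n"
  have "C2 U (\<lambda>x. (if ij = kl then 1 else 0) - F x $ fst ij $ fst kl * F x $ snd ij $ snd kl)"
    using assms unfolding C2M_def by (intro C2_diff C2_mult C2_const) auto
  then show "C2 U (\<lambda>x. Lmat (F x) $ ij $ kl)" by (simp add: Lmat_def)
qed

definition Cr :: "real^'n^'n \<Rightarrow> real^'n^'n \<Rightarrow> 'n \<times> 'n \<Rightarrow> real^('n \<times> 'n)^('n \<times> 'n)" where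
  "Cr M W kl = (\<chi> r c. if c = kl then vecm W $ r else Lmat M $ r $ c)"

lemma C2M_Cr:
  fixes F :: "'a::real_normed_vector \<Rightarrow> real^'n^'n"
  assumes "C2M U F"
  shows "C2M U (\<lambda>x. Cr (F x) W kl)"
  unfolding C2M_def
proof (intro allI)
  fix r c :: "'n \<times> 'n"
  show "C2 U (\<lambda>x. Cr (F x) W kl $ r $ c)"
  proof (cases "c = kl")
    case True
    then show ?thesis by (simp add: Cr_def C2_const)
  next
    case False
    have "C2 U (\<lambda>x. Lmat (F x) $ r $ c)" using C2M_Lmat[OF assms] unfolding C2M_def by blast
    then show ?thesis using False by (simp add: Cr_def)
  qed
qed

lemma SigF_entry: "SigF M W $ i $ j = det (Cr M W (i, j)) / det (Lmat M)"
  by (simp add: SigF_def unvecm_def Cr_def)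

lemma C2M_SigF:
  assumes F: "C2M U F" and nz: "\<And>x. x \<in> U \<Longrightarrow> det (Lmat (F x)) \<noteq> 0"
  shows "C2M U (\<lambda>x. SigF (F x) W)"
  unfolding C2M_def SigF_entry
  by (intro allI C2_divide C2_det C2M_Cr C2M_Lmat F nz)

lemma psd_add: "psd_mat X \<Longrightarrow> psd_mat Y \<Longrightarrow> psd_mat (X + Y)"
  unfolding psd_mat_def
  by (auto simp: transpose_add' matrix_vector_mult_add_rdistrib inner_add_right add_nonneg_nonneg)

lemma psd_cong:
  fixes B :: "real^'p^'n" and S :: "real^'p^'p"
  assumes "psd_mat S"
  shows "psd_mat (B ** S ** transpose B)"
proof -
  have t: "transpose S = S" and q: "\<And>v. v \<bullet> (S *v v) \<ge> 0" using assms by (auto simp: psd_mat_def)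
  have "transpose (B ** S ** transpose B) = B ** S ** transpose B"
    using t by (simp add: matrix_transpose_mul matrix_mul_assoc)
  moreover have "v \<bullet> ((B ** S ** transpose B) *v v) \<ge> 0" for v
  proof -
    have "(B ** S ** transpose B) *v v = B *v (S *v (transpose B *v v))"
      by (simp only: matrix_vector_mul_assoc matrix_mul_assoc)
    then have "v \<bullet> ((B ** S ** transpose B) *v v) = (transpose B *v v) \<bullet> (S *v (transpose B *v v))"
      by (simp only: inner_mv)
    then show ?thesis using q by simp
  qed
  ultimately show ?thesis unfolding psd_mat_def by blast
qed

theorem lemma2:
  fixes A :: "real^'n^'n" and B :: "real^'p^'n"
    and Sw :: "real^'n^'n" and Ss :: "real^'p^'p"
    and Q :: "real^'n^'n" and R :: "real^'p^'p"
    and \<epsilon> \<delta> lam :: real and q :: "real^'n"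
  assumes "stabilizable A B"
    and "pos_def_mat Q" and "pos_def_mat R"
    and "detectable A (psd_sqrt Q)"
    and "psd_mat Sw" and "psd_mat Ss"
    and "\<epsilon> > 0" and "\<delta> > 0"
    and "lam > 0"
  shows "C2_on {K::real^'n^'p. spec_rad (A - B ** K) < 1}
           (\<lambda>K. Lagr A B Sw Ss Q R \<epsilon> \<delta> q K lam)"
proof -
  define S where "S = {K::real^'n^'p. spec_rad (A - B ** K) < 1}"
  define W where "W = Sigma_wbar B Sw Ss"
  have Wpsd: "psd_mat W" unfolding W_def Sigma_wbar_def by (intro psd_add psd_cong assms(5,6))
  have Wq: "q \<bullet> (W *v q) \<ge> 0" using Wpsd by (simp add: psd_mat_def)
  define sq where "sq = sqrt (q \<bullet> (W *v q))"
  define v where "v = (\<lambda>K::real^'n^'p. q \<bullet> (SigF (A - B ** K) W *v q))"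
  define JcF where "JcF = (\<lambda>K::real^'n^'p. if sq = 0 then Qfun 0 else Qfun (\<epsilon> / sqrt (v K)))"
  define G where "G = (\<lambda>K::real^'n^'p. trace ((Q + transpose K ** R ** K) ** SigF (A - B ** K) W)
      + trace (R ** Ss) + lam * (JcF K - \<delta>))"
  have openS: "open S" unfolding S_def by (rule stable_open)
  have props: "det (Lmat (A - B ** K)) \<noteq> 0 \<and>
      SigF (A - B ** K) W = W + (A - B ** K) ** SigF (A - B ** K) W ** transpose (A - B ** K) \<and>
      psd_mat (SigF (A - B ** K) W) \<and> v K \<ge> q \<bullet> (W *v q)" if K: "K \<in> S" for K
  proof -
    have M: "spec_rad (A - B ** K) < 1" using K by (simp add: S_def)
    have d: "det (Lmat (A - B ** K)) \<noteq> 0" by (rule det_Lmat_nonzero[OF M])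
    have Ssol: "SigF (A - B ** K) W = W + (A - B ** K) ** SigF (A - B ** K) W ** transpose (A - B ** K)"
      by (rule SigF_solves[OF d])
    have Spsd: "psd_mat (SigF (A - B ** K) W)" by (rule lyap_psd[OF M Wpsd Ssol])
    have "psd_mat ((A - B ** K) ** SigF (A - B ** K) W ** transpose (A - B ** K))"
      by (rule psd_cong[OF Spsd])
    then have h: "q \<bullet> (((A - B ** K) ** SigF (A - B ** K) W ** transpose (A - B ** K)) *v q) \<ge> 0"
      by (simp add: psd_mat_def)
    have "v K = q \<bullet> (W *v q) + q \<bullet> (((A - B ** K) ** SigF (A - B ** K) W ** transpose (A - B ** K)) *v q)"
      unfolding v_def by (subst Ssol) (simp add: matrix_vector_mult_add_rdistrib inner_add_right)
    then have "v K \<ge> q \<bullet> (W *v q)" using h by simp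
    then show ?thesis using d Ssol Spsd by blast
  qed
  have eqS: "Lagr A B Sw Ss Q R \<epsilon> \<delta> q K lam = G K" if K: "K \<in> S" for K
  proof -
    have M: "spec_rad (A - B ** K) < 1" using K by (simp add: S_def)
    have SK: "Sigma_K A B Sw Ss K = SigF (A - B ** K) W" unfolding W_def by (rule Sigma_K_eq[OF M])
    have Ssol: "SigF (A - B ** K) W = W + (A - B ** K) ** SigF (A - B ** K) W ** transpose (A - B ** K)"
      and Spsd: "psd_mat (SigF (A - B ** K) W)" using props[OF K] by auto
    have Jc_eq: "Jc A B Sw Ss \<epsilon> q K = JcF K"
    proof -
      define \<Sigma> where "\<Sigma> = SigF (A - B ** K) W"
      define L where "L = (SOME L::real^'n^'n. L ** transpose L = \<Sigma>)"
      have L: "L ** transpose L = \<Sigma>" unfolding L_def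
        by (rule someI_ex) (rule gram[OF Spsd[folded \<Sigma>_def]])
      define M where "M = A - B ** K"
      define c where "c = transpose (M ** L) *v q"
      have "Jc A B Sw Ss \<epsilon> q K = (\<integral>z. Qfun (a_fun A B Sw Ss \<epsilon> q (L *v (\<chi> i. z i)) K) \<partial>PiM UNIV (\<lambda>_. NN))"
        unfolding Jc_def gauss_expect_def SK \<Sigma>_def[symmetric] L_def[symmetric] Let_def ..
      also have "\<dots> = (\<integral>z. Qfun ((\<epsilon> - c \<bullet> (\<chi> i. z i)) / sq) \<partial>PiM UNIV (\<lambda>_. NN))"
      proof -
        have "q \<bullet> ((A - B ** K) *v (L *v x)) = c \<bullet> x" for x
        proof -
          have "q \<bullet> ((A - B ** K) *v (L *v x)) = q \<bullet> ((M ** L) *v x)"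
            by (simp add: M_def matrix_vector_mul_assoc)
          also have "\<dots> = c \<bullet> x" unfolding c_def by (rule inner_mv)
          finally show ?thesis .
        qed
        then show ?thesis
          by (simp add: a_fun_def sq_def W_def)
      qed
      also have "\<dots> = JcF K"
      proof (cases "sq = 0")
        case True
        interpret P: prob_space "PiM (UNIV::'n set) (\<lambda>_. NN)" by (rule prob_P)
        show ?thesis using True by (simp add: JcF_def P.prob_space)
      next
        case False
        then have sq0: "sq > 0" unfolding sq_def using Wq by simp
        have cc: "c \<bullet> c = q \<bullet> ((M ** \<Sigma> ** transpose M) *v q)"
        proof -
          have "c \<bullet> c = q \<bullet> ((M ** L) *v c)" unfolding c_def by (rule inner_mv[symmetric])
          also have "(M ** L) *v c = (M ** L ** transpose (M ** L)) *v q"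
            unfolding c_def by (simp only: matrix_vector_mul_assoc)
          also have "M ** L ** transpose (M ** L) = M ** \<Sigma> ** transpose M"
            unfolding L[symmetric] by (simp add: matrix_transpose_mul matrix_mul_assoc)
          finally show ?thesis .
        qed
        have "sq\<^sup>2 + c \<bullet> c = v K"
        proof -
          have "sq\<^sup>2 = q \<bullet> (W *v q)" unfolding sq_def using Wq by simp
          moreover have "v K = q \<bullet> (W *v q) + q \<bullet> ((M ** \<Sigma> ** transpose M) *v q)"
            unfolding v_def \<Sigma>_def M_def
            by (subst Ssol) (simp add: matrix_vector_mult_add_rdistrib inner_add_right)
          ultimately show ?thesis using cc by simp
        qed
        then show ?thesis using gauss_lin[OF sq0, of \<epsilon> c] False by (simp add: JcF_def)
      qed
      finally show ?thesis .
    qed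
    show ?thesis
      unfolding Lagr_def Jcost_def Jc_eq SK G_def by simp
  qed
  have C2G: "C2 S G"
  proof -
    have CM: "C2M S (\<lambda>K::real^'n^'p. A - B ** K)"
      by (intro C2M_diff C2M_const C2M_mult C2M_id)
    have CS: "C2M S (\<lambda>K::real^'n^'p. SigF (A - B ** K) W)"
      by (rule C2M_SigF[OF CM]) (use props in blast)
    have CJ: "C2 S (\<lambda>K. trace ((Q + transpose K ** R ** K) ** SigF (A - B ** K) W))"
      by (intro C2_trace C2M_mult C2M_add C2M_const C2M_transpose C2M_id CS)
    have CF: "C2 S JcF"
    proof (cases "sq = 0")
      case True
      then show ?thesis by (simp add: JcF_def C2_const)
    next
      case False
      then have sq0: "sq > 0" unfolding sq_def using Wq by simp
      have vpos: "v K > 0" if "K \<in> S" for K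
      proof -
        have "q \<bullet> (W *v q) > 0" using sq0 unfolding sq_def by simp
        then show ?thesis using props[OF that] by linarith
      qed
      have Cv: "C2 S v" unfolding v_def by (rule C2_quad[OF CS])
      have Csq: "C2 S (\<lambda>K. sqrt (v K))"
        by (rule C2_chain[OF C2_sqrt_real Cv]) (use vpos in auto)
      have Cd: "C2 S (\<lambda>K. \<epsilon> / sqrt (v K))"
      proof (rule C2_divide[OF C2_const Csq])
        fix K assume "K \<in> S"
        from vpos[OF this] show "sqrt (v K) \<noteq> 0" by simp
      qed
      have "C2 S (\<lambda>K. Qfun (\<epsilon> / sqrt (v K)))"
        by (rule C2_chain[OF Qfun_C2 Cd]) auto
      then show ?thesis using False by (simp add: JcF_def)
    qed
    show ?thesis unfolding G_def
      by (intro C2_add C2_mult C2_diff C2_const CJ CF)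
  qed
  have "C2 S (\<lambda>K. Lagr A B Sw Ss Q R \<epsilon> \<delta> q K lam)"
    by (rule C2_cong[OF openS eqS C2G])
  then show ?thesis unfolding S_def by (rule C2_imp_C2_on)
qed

end
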